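(* Let $m,n\in\mathbb{N}$, $\epsilon\in\{1,-1\}$, $\sigma\in\{1,-1\}$, and let $S$ ($n\times n$), $U$ ($m\times n$), $V$ ($n\times m$) be constant complex matrices, $S$ invertible in the discrete cases. Suppose $K$ is an $n\times n$ matrix satisfying $SK+KS^*=VU$ (continuous case) or $S^{-1}K-KS^*=VU$ (semi- and fully discrete cases), and let $\Xi=e^{-xS-\mathrm{i}tS^2}$ ($x,t\in\mathbb{R}$; continuous), $\Xi=S^xe^{-\mathrm{i}t\omega(S)}$ ($x\in\mathbb{Z},t\in\mathbb{R}$; semi-discrete), $\Xi=S^x\Omega(S)^t$ ($x,t\in\mathbb{Z}$; fully discrete), with $\omega(S)=S+S^{-1}-2I_n$ and $\Omega(S)=[I_n+\mathrm{i}(I_n-S^{-1})][I_n-\mathrm{i}(I_n-S)]^{-1}$. Then (wherever the inverses exist) $$q=\sigma\,U\big((\Xi^* )^{-1}-\epsilon K^*\Xi K\big)^{-1}V^*,\qquad p=\epsilon\,U\Xi^*K^*\big(\Xi^{-1}-\epsilon K\Xi^*K^*\big)^{-1}V$$ solve, respectively, the $m\times m$ matrix continuous NLS equations $\mathrm{i}q_t+q_{xx}-2\epsilon qq^*q=0$, $p_x=-\epsilon qq^*$; the semi-discrete equations $\mathrm{i}\dot q+q^+-2q+q^--\epsilon(q^+q^*q+qq^*q^-)=0$, $p^+-p=-\epsilon q^+q^*$; and the fully discrete equations $\mathrm{i}(q_+-q)+(q^+-q)_+-(q-q^-)-\epsilon(q^+q^*q)_+-\epsilon qq^*q^-+(p_+-p)q_++q(p_+-p)^*=0$,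 $p^+-p=-\epsilon q^+q^*$.
   Context: ${}^*$ denotes entrywise complex conjugation (not conjugate transpose). $f^\pm(x,t)=f(x\pm1,t)$, $f_\pm(x,t)=f(x,t\pm1)$, $\dot f=\partial_t f$. $q,p$ are $m\times m$ matrix functions. *)

theory Defs
  imports "HOL-Analysis.Analysis"
begin

text \<open>Matrices are elements of complex^'c^'r (r rows, c columns); dimensions are
  the cardinalities of the finite index types.\<close>

text \<open>Entrywise complex conjugation (NOT conjugate transpose).\<close>
definition mconj :: "complex^'c^'r \<Rightarrow> complex^'c^'r" where
  "mconj A = (\<chi> i j. cnj (A $ i $ j))"

definition csc :: "complex \<Rightarrow> complex^'c^'r \<Rightarrow> complex^'c^'r" where
  "csc c A = (\<chi> i j. c * A $ i $ j)"

primrec mpow :: "complex^'n^'n \<Rightarrow> nat \<Rightarrow> complex^'n^'n" where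
  "mpow A 0 = mat 1"
| "mpow A (Suc k) = A ** mpow A k"

definition mexp :: "complex^'n^'n \<Rightarrow> complex^'n^'n" where
  "mexp A = (\<Sum>k. (1 / fact k) *\<^sub>R mpow A k)"

definition mzpow :: "complex^'n^'n \<Rightarrow> int \<Rightarrow> complex^'n^'n" where
  "mzpow A k = (if 0 \<le> k then mpow A (nat k) else mpow (matrix_inv A) (nat (- k)))"

definition omegaS :: "complex^'n^'n \<Rightarrow> complex^'n^'n" where
  "omegaS S = S + matrix_inv S - 2 *\<^sub>R mat 1"

definition OmegaS :: "complex^'n^'n \<Rightarrow> complex^'n^'n" where
  "OmegaS S = (mat 1 + csc \<i> (mat 1 - matrix_inv S)) ** matrix_inv (mat 1 - csc \<i> (mat 1 - S))"

definition Xi_c :: "complex^'n^'n \<Rightarrow> real \<Rightarrow> real \<Rightarrow> complex^'n^'n" where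
  "Xi_c S x t = mexp (- (x *\<^sub>R S) - csc \<i> (t *\<^sub>R (S ** S)))"

definition Xi_sd :: "complex^'n^'n \<Rightarrow> int \<Rightarrow> real \<Rightarrow> complex^'n^'n" where
  "Xi_sd S x t = mzpow S x ** mexp (- csc \<i> (t *\<^sub>R omegaS S))"

definition Xi_fd :: "complex^'n^'n \<Rightarrow> int \<Rightarrow> int \<Rightarrow> complex^'n^'n" where
  "Xi_fd S x t = mzpow S x ** mzpow (OmegaS S) t"

definition qsol :: "real \<Rightarrow> real \<Rightarrow> complex^'n^'m \<Rightarrow> complex^'m^'n \<Rightarrow> complex^'n^'n
    \<Rightarrow> complex^'n^'n \<Rightarrow> complex^'m^'m" where
  "qsol \<sigma> \<epsilon> U V K Xi =
     \<sigma> *\<^sub>R (U ** matrix_inv (matrix_inv (mconj Xi) - \<epsilon> *\<^sub>R (mconj K ** Xi ** K)) ** mconj V)"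

definition psol :: "real \<Rightarrow> complex^'n^'m \<Rightarrow> complex^'m^'n \<Rightarrow> complex^'n^'n
    \<Rightarrow> complex^'n^'n \<Rightarrow> complex^'m^'m" where
  "psol \<epsilon> U V K Xi =
     \<epsilon> *\<^sub>R (U ** mconj Xi ** mconj K ** matrix_inv (matrix_inv Xi - \<epsilon> *\<^sub>R (K ** mconj Xi ** mconj K)) ** V)"

definition inv_ok :: "real \<Rightarrow> complex^'n^'n \<Rightarrow> complex^'n^'n \<Rightarrow> bool" where
  "inv_ok \<epsilon> K Xi \<longleftrightarrow> invertible Xi \<and> invertible (mconj Xi)
     \<and> invertible (matrix_inv (mconj Xi) - \<epsilon> *\<^sub>R (mconj K ** Xi ** K))
     \<and> invertible (matrix_inv Xi - \<epsilon> *\<^sub>R (K ** mconj Xi ** mconj K))"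

end

theory Submission
  imports Defs
begin

lemma mv_scaleR: "(A::complex^'n^'m) *v (c *\<^sub>R v) = c *\<^sub>R (A *v v)"
  by (simp add: vec_eq_iff matrix_vector_mult_def scaleR_sum_right)

lemma bl_mv: "bounded_linear (\<lambda>v::complex^'n. (A::complex^'n^'m) *v v)"
  unfolding linear_conv_bounded_linear[symmetric]
  by (rule linearI) (simp_all add: matrix_vector_right_distrib mv_scaleR)

typedef ('n::finite) sqm = "UNIV :: (complex^'n^'n) set" morphisms Rep_sqm Abs_sqm by simp

setup_lifting type_definition_sqm

instantiation sqm :: (finite) real_normed_algebra_1
begin
lift_definition zero_sqm :: "'a sqm" is 0 .
lift_definition one_sqm :: "'a sqm" is "mat 1" .
lift_definition plus_sqm :: "'a sqm \<Rightarrow> 'a sqm \<Rightarrow> 'a sqm" is "(+)" .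
lift_definition minus_sqm :: "'a sqm \<Rightarrow> 'a sqm \<Rightarrow> 'a sqm" is "(-)" .
lift_definition uminus_sqm :: "'a sqm \<Rightarrow> 'a sqm" is "uminus" .
lift_definition times_sqm :: "'a sqm \<Rightarrow> 'a sqm \<Rightarrow> 'a sqm" is "(**)" .
lift_definition scaleR_sqm :: "real \<Rightarrow> 'a sqm \<Rightarrow> 'a sqm" is "scaleR" .
lift_definition norm_sqm :: "'a sqm \<Rightarrow> real" is "\<lambda>A. onorm (\<lambda>v. A *v v)" .
definition dist_sqm :: "'a sqm \<Rightarrow> 'a sqm \<Rightarrow> real" where "dist_sqm a b = norm (a - b)"
definition sgn_sqm :: "'a sqm \<Rightarrow> 'a sqm" where "sgn_sqm x = scaleR (inverse (norm x)) x"
definition uniformity_sqm :: "('a sqm \<times> 'a sqm) filter" where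
  "uniformity_sqm = (INF e\<in>{0 <..}. principal {(x, y). dist x y < e})"
definition open_sqm :: "'a sqm set \<Rightarrow> bool"
  where "open_sqm S = (\<forall>x\<in>S. \<forall>\<^sub>F (x', y) in uniformity. x' = x \<longrightarrow> y \<in> S)"
instance
proof
  fix a b c :: "'a sqm" and r s :: real
  show "a * b * c = a * (b * c)" by transfer (simp add: matrix_mul_assoc)
  show "(a + b) * c = a * c + b * c" by transfer (simp add: vec_eq_iff matrix_matrix_mult_def algebra_simps sum.distrib)
  show "a * (b + c) = a * b + a * c" by transfer (simp add: matrix_add_ldistrib)
  show "1 * a = a" by transfer simp
  show "a * 1 = a" by transfer simp
  show "(0::'a sqm) \<noteq> 1" by transfer (simp add: vec_eq_iff mat_def)
  show "a + b + c = a + (b + c)" by transfer simp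
  show "a + b = b + a" by transfer simp
  show "0 + a = a" by transfer simp
  show "- a + a = 0" by transfer simp
  show "a - b = a + - b" by transfer simp
  show "r *\<^sub>R (a + b) = r *\<^sub>R a + r *\<^sub>R b" by transfer (simp add: scaleR_add_right)
  show "(r + s) *\<^sub>R a = r *\<^sub>R a + s *\<^sub>R a" by transfer (simp add: scaleR_add_left)
  show "r *\<^sub>R s *\<^sub>R a = (r * s) *\<^sub>R a" by transfer simp
  show "1 *\<^sub>R a = a" by transfer simp
  show "r *\<^sub>R a * b = r *\<^sub>R (a * b)" by transfer (simp add: scalar_matrix_assoc)
  show "a * r *\<^sub>R b = r *\<^sub>R (a * b)" by transfer (simp add: matrix_scalar_ac scalar_matrix_assoc)
  show "dist a b = norm (a - b)" by (simp add: dist_sqm_def)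
  show "sgn a = inverse (norm a) *\<^sub>R a" by (simp add: sgn_sqm_def)
  show "uniformity = (INF e\<in>{0<..}. principal {(x, y::'a sqm). dist x y < e})" by (simp add: uniformity_sqm_def)
  show "open U = (\<forall>x\<in>U. \<forall>\<^sub>F (x', y) in uniformity. x' = x \<longrightarrow> y \<in> U)" for U :: "'a sqm set"
    by (simp add: open_sqm_def)
  show "(norm a = 0) = (a = 0)"
    apply transfer
    apply (subst onorm_eq_0[OF bl_mv])
    by (metis matrix_eq matrix_vector_mult_0)
  show "norm (a + b) \<le> norm a + norm b"
  proof transfer
    fix a b :: "complex^'a^'a"
    have "(\<lambda>v. (a+b) *v v) = (\<lambda>v. a *v v + b *v v)" by (simp add: matrix_vector_mult_add_rdistrib)
    then show "onorm (\<lambda>v. (a+b) *v v) \<le> onorm (\<lambda>v. a *v v) + onorm (\<lambda>v. b *v v)"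
      using onorm_triangle[OF bl_mv[of a] bl_mv[of b]] by simp
  qed
  show "norm (r *\<^sub>R a) = \<bar>r\<bar> * norm a"
  proof transfer
    fix r :: real and a :: "complex^'a^'a"
    have "(\<lambda>v. (r *\<^sub>R a) *v v) = (\<lambda>v. r *\<^sub>R (a *v v))"
      by (rule ext) (simp add: matrix_vector_mult_def vec_eq_iff scaleR_sum_right)
    then show "onorm (\<lambda>v. (r *\<^sub>R a) *v v) = \<bar>r\<bar> * onorm (\<lambda>v. a *v v)"
      using onorm_scaleR[OF bl_mv[of a]] by simp
  qed
  show "norm (a * b) \<le> norm a * norm b"
  proof transfer
    fix a b :: "complex^'a^'a"
    have "(\<lambda>v. (a ** b) *v v) = (\<lambda>v. a *v v) o (\<lambda>v. b *v v)" by (simp add: o_def matrix_vector_mul_assoc)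
    then show "onorm (\<lambda>v. (a ** b) *v v) \<le> onorm (\<lambda>v. a *v v) * onorm (\<lambda>v. b *v v)"
      using onorm_compose[OF bl_mv[of a] bl_mv[of b]] by metis
  qed
  show "norm (1::'a sqm) = 1"
    apply transfer by (simp add: onorm_id)
qed
end


lemma norm_l1_gen: "norm (x::'a::real_normed_vector^'n) \<le> (\<Sum>i\<in>UNIV. norm (x$i))"
  by (simp add: norm_vec_def L2_set_le_sum)

lemma norm_sqm_def': "norm A = onorm (\<lambda>v. Rep_sqm A *v v)"
  by (simp add: norm_sqm.rep_eq)

lemma axis_mv: "((A::complex^'n^'m) *v axis j 1) $ i = A $ i $ j"
  by (simp add: matrix_vector_mult_def axis_def if_distrib cong: if_cong)

lemma norm_axis_le: "norm (axis j (1::complex)) \<le> 1"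
proof -
  have "norm (axis j (1::complex)) \<le> (\<Sum>k\<in>UNIV. norm (axis j (1::complex) $ k))" by (rule norm_l1_gen)
  also have "\<dots> = 1" by (simp add: axis_def if_distrib cong: if_cong)
  finally show ?thesis .
qed

lemma entry_le_norm: "norm (Rep_sqm A $ i $ j) \<le> norm A"
proof -
  have "norm (Rep_sqm A $ i $ j) = norm ((Rep_sqm A *v axis j 1) $ i)" by (simp add: axis_mv)
  also have "\<dots> \<le> norm (Rep_sqm A *v axis j 1)" by (rule Finite_Cartesian_Product.norm_nth_le)
  also have "\<dots> \<le> norm A * norm (axis j (1::complex))"
    unfolding norm_sqm_def' by (rule onorm[OF bl_mv])
  also have "\<dots> \<le> norm A * 1" by (rule mult_left_mono[OF norm_axis_le norm_ge_zero])
  finally show ?thesis by simp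
qed

lemma rep_le_norm: "norm (Rep_sqm (A::'n::finite sqm)) \<le> of_nat (CARD('n) * CARD('n)) * norm A"
proof -
  have "norm (Rep_sqm A) \<le> (\<Sum>i\<in>UNIV. norm (Rep_sqm A $ i))" by (rule norm_l1_gen)
  also have "\<dots> \<le> (\<Sum>i\<in>(UNIV::'n set). \<Sum>j\<in>(UNIV::'n set). norm (Rep_sqm A $ i $ j))"
    by (rule sum_mono) (rule norm_l1_gen)
  also have "\<dots> \<le> (\<Sum>i\<in>(UNIV::'n set). \<Sum>j\<in>(UNIV::'n set). norm A)"
    by (intro sum_mono entry_le_norm)
  finally show ?thesis by simp
qed

lemma norm_le_rep: "norm (A::'n::finite sqm) \<le> of_nat (CARD('n) * CARD('n)) * norm (Rep_sqm A)"
  unfolding norm_sqm_def'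
proof (rule onorm_bound)
  show "0 \<le> of_nat (CARD('n) * CARD('n)) * norm (Rep_sqm A)" by simp
  fix v :: "complex^'n"
  have "norm (Rep_sqm A *v v) \<le> (\<Sum>i\<in>UNIV. norm ((Rep_sqm A *v v) $ i))" by (rule norm_l1_gen)
  also have "\<dots> \<le> (\<Sum>i\<in>(UNIV::'n set). \<Sum>j\<in>(UNIV::'n set). norm (Rep_sqm A) * norm v)"
  proof (rule sum_mono)
    fix i
    have "norm ((Rep_sqm A *v v) $ i) = norm (\<Sum>j\<in>UNIV. Rep_sqm A $ i $ j * v $ j)"
      by (simp add: matrix_vector_mult_def)
    also have "\<dots> \<le> (\<Sum>j\<in>UNIV. norm (Rep_sqm A $ i $ j * v $ j))" by (rule norm_sum)
    also have "\<dots> \<le> (\<Sum>j\<in>(UNIV::'n set). norm (Rep_sqm A) * norm v)"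
    proof (rule sum_mono)
      fix j
      have "norm (Rep_sqm A $ i $ j) \<le> norm (Rep_sqm A)"
        by (metis Finite_Cartesian_Product.norm_nth_le order_trans)
      moreover have "norm (v $ j) \<le> norm v" by (rule Finite_Cartesian_Product.norm_nth_le)
      ultimately show "norm (Rep_sqm A $ i $ j * v $ j) \<le> norm (Rep_sqm A) * norm v"
        by (simp add: norm_mult mult_mono)
    qed
    finally show "norm ((Rep_sqm A *v v) $ i) \<le> (\<Sum>j\<in>(UNIV::'n set). norm (Rep_sqm A) * norm v)" .
  qed
  also have "\<dots> = of_nat (CARD('n) * CARD('n)) * norm (Rep_sqm A) * norm v" by simp
  finally show "norm (Rep_sqm A *v v) \<le> of_nat (CARD('n) * CARD('n)) * norm (Rep_sqm A) * norm v" .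
qed

lemma Rep_sqm_diff: "Rep_sqm (a - b) = Rep_sqm a - Rep_sqm b" by transfer simp
lemma Rep_sqm_add: "Rep_sqm (a + b) = Rep_sqm a + Rep_sqm b" by transfer simp
lemma Rep_sqm_scaleR: "Rep_sqm (r *\<^sub>R a) = r *\<^sub>R Rep_sqm a" by transfer simp
lemma Rep_sqm_mult: "Rep_sqm (a * b) = Rep_sqm a ** Rep_sqm b" by transfer simp
lemma Rep_sqm_one: "Rep_sqm 1 = mat 1" by transfer simp

lemma bl_Rep_sqm: "bounded_linear Rep_sqm"
proof
  show "Rep_sqm (a + b) = Rep_sqm a + Rep_sqm b" for a b :: "'a sqm" by (rule Rep_sqm_add)
  show "Rep_sqm (r *\<^sub>R b) = r *\<^sub>R Rep_sqm b" for r and b :: "'a sqm" by (rule Rep_sqm_scaleR)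
  show "\<exists>K. \<forall>x::'a sqm. norm (Rep_sqm x) \<le> norm x * K"
    by (rule exI[of _ "of_nat (CARD('a) * CARD('a))"]) (metis rep_le_norm mult.commute)
qed

instance sqm :: (finite) banach
proof
  fix X :: "nat \<Rightarrow> 'a sqm"
  assume "Cauchy X"
  define C where "C = (of_nat (CARD('a) * CARD('a)) :: real)"
  have C: "C > 0" by (simp add: C_def)
  have "Cauchy (\<lambda>n. Rep_sqm (X n))"
  proof (rule metric_CauchyI)
    fix e :: real assume "e > 0"
    then obtain M where M: "\<forall>m\<ge>M. \<forall>n\<ge>M. dist (X m) (X n) < e / C"
      using metric_CauchyD[OF \<open>Cauchy X\<close>, of "e / C"] C by auto
    show "\<exists>M. \<forall>m\<ge>M. \<forall>n\<ge>M. dist (Rep_sqm (X m)) (Rep_sqm (X n)) < e"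
    proof (intro exI allI impI)
      fix m n assume "m \<ge> M" "n \<ge> M"
      have "dist (Rep_sqm (X m)) (Rep_sqm (X n)) = norm (Rep_sqm (X m - X n))"
        by (simp add: dist_norm Rep_sqm_diff)
      also have "\<dots> \<le> C * norm (X m - X n)" unfolding C_def by (rule rep_le_norm)
      also have "\<dots> < C * (e / C)"
      proof (rule mult_strict_left_mono[OF _ C])
        show "norm (X m - X n) < e / C" using M \<open>m \<ge> M\<close> \<open>n \<ge> M\<close> by (simp add: dist_norm)
      qed
      also have "\<dots> = e" using C by simp
      finally show "dist (Rep_sqm (X m)) (Rep_sqm (X n)) < e" .
    qed
  qed
  then obtain L where L: "(\<lambda>n. Rep_sqm (X n)) \<longlonglongrightarrow> L"
    using Cauchy_convergent_iff convergent_def by blast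
  have "(\<lambda>n. X n - Abs_sqm L) \<longlonglongrightarrow> 0"
  proof (rule Lim_null_comparison)
    show "\<forall>\<^sub>F n in sequentially. norm (X n - Abs_sqm L) \<le> C * norm (Rep_sqm (X n) - L)"
      using norm_le_rep[of "X _ - Abs_sqm L"] by (simp add: C_def Rep_sqm_diff Abs_sqm_inverse)
    show "(\<lambda>n. C * norm (Rep_sqm (X n) - L)) \<longlonglongrightarrow> 0"
      using L by (intro tendsto_mult_right_zero) (simp add: LIM_zero_iff tendsto_norm_zero)
  qed
  then have "X \<longlonglongrightarrow> Abs_sqm L" by (simp add: LIM_zero_iff)
  then show "convergent X" by (auto simp: convergent_def)
qed

lemma Rep_sqm_power: "Rep_sqm (x ^ k) = mpow (Rep_sqm x) k"
  by (induction k) (simp_all add: Rep_sqm_one Rep_sqm_mult)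

lemma mexp_sqm: "mexp A = Rep_sqm (exp (Abs_sqm A))"
proof -
  have "(\<lambda>k. Rep_sqm ((Abs_sqm A)^k /\<^sub>R fact k)) sums Rep_sqm (exp (Abs_sqm A))"
    by (rule bounded_linear.sums[OF bl_Rep_sqm exp_converges])
  moreover have "(\<lambda>k. Rep_sqm ((Abs_sqm A)^k /\<^sub>R fact k)) = (\<lambda>k. (1 / fact k) *\<^sub>R mpow A k)"
    by (rule ext) (simp add: Rep_sqm_scaleR Rep_sqm_power Abs_sqm_inverse divide_inverse)
  ultimately show ?thesis unfolding mexp_def by (simp add: sums_iff)
qed

lemma minv_r: "invertible A \<Longrightarrow> A ** matrix_inv A = mat 1"
  unfolding invertible_def matrix_inv_def by (metis (mono_tags, lifting) someI)
lemma minv_l: "invertible A \<Longrightarrow> matrix_inv A ** A = mat 1"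
  unfolding invertible_def matrix_inv_def by (metis (mono_tags, lifting) someI)

lemma minv_unique: fixes A B :: "complex^'n^'n" assumes "A ** B = mat 1" shows "matrix_inv A = B"
proof -
  have i: "invertible A" using assms invertible_right_inverse by blast
  have "matrix_inv A = matrix_inv A ** (A ** B)" using assms by simp
  also have "\<dots> = B" by (simp add: matrix_mul_assoc minv_l[OF i])
  finally show ?thesis .
qed

lemma invertible_minv: "invertible (A::complex^'n^'n) \<Longrightarrow> invertible (matrix_inv A)"
  using minv_l invertible_right_inverse by blast
lemma minv_minv: "invertible (A::complex^'n^'n) \<Longrightarrow> matrix_inv (matrix_inv A) = A"
  by (rule minv_unique) (rule minv_l)

lemma det_cont: "continuous_on UNIV (det :: complex^'n^'n \<Rightarrow> complex)"
  unfolding det_def[abs_def] by (intro continuous_intros)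

lemma cont_det_comp: "continuous_on UNIV f \<Longrightarrow> continuous_on UNIV (\<lambda>x. det (f x :: complex^'n^'n))"
  using continuous_on_compose2[OF det_cont] by blast

lemma minv_cramer:
  fixes A :: "complex^'n^'n" assumes "det A \<noteq> 0"
  shows "matrix_inv A = (\<chi> k j. det (\<chi> i l. if l = k then axis j 1 $ i else A$i$l) / det A)"
proof -
  have i: "invertible A" using assms invertible_det_nz by blast
  show ?thesis
  proof (subst vec_eq_iff, intro allI, subst vec_eq_iff, intro allI)
    fix k j
    have "A *v (matrix_inv A *v axis j 1) = axis j 1"
      by (simp add: matrix_vector_mul_assoc minv_r[OF i])
    then have "matrix_inv A *v axis j 1 = (\<chi> k. det (\<chi> i l. if l = k then axis j 1 $ i else A$i$l) / det A)"
      using cramer[OF assms] by blast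
    then have "(matrix_inv A *v axis j 1) $ k = det (\<chi> i l. if l = k then axis j 1 $ i else A$i$l) / det A"
      by simp
    then show "matrix_inv A $ k $ j = (\<chi> k j. det (\<chi> i l. if l = k then axis j 1 $ i else A$i$l) / det A) $ k $ j"
      by (simp add: axis_mv)
  qed
qed

lemma open_det_nz: "open {A::complex^'n^'n. det A \<noteq> 0}"
  using open_vimage[OF open_UNIV[THEN open_Diff[OF _ closed_singleton], of 0] det_cont]
  by (simp add: vimage_def Collect_neg_eq[symmetric] set_diff_eq)

lemma minv_cont: fixes A :: "complex^'n^'n" assumes "invertible A" shows "isCont matrix_inv A"
proof -
  let ?S = "{A::complex^'n^'n. det A \<noteq> 0}"
  let ?g = "\<lambda>A::complex^'n^'n. (\<chi> k j. det (\<chi> i l. if l = k then axis j 1 $ i else A$i$l) / det A)"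
  have "continuous_on ?S ?g"
    apply (intro continuous_intros continuous_on_subset[OF cont_det_comp] det_cont[THEN continuous_on_subset])
    subgoal for k j i l by (cases "l = k") (auto intro!: continuous_intros)
    by auto
  then have "continuous_on ?S matrix_inv"
    by (rule continuous_on_eq) (simp add: minv_cramer)
  moreover have "A \<in> ?S" using assms invertible_det_nz by blast
  ultimately show ?thesis using open_det_nz continuous_on_eq_continuous_at by blast
qed

lemma mm_scaleR_left: "(c *\<^sub>R (A::complex^'n^'m)) ** B = c *\<^sub>R (A ** B)"
  by (simp add: scalar_matrix_assoc)
lemma mm_scaleR_right: "(A::complex^'n^'m) ** (c *\<^sub>R B) = c *\<^sub>R (A ** B)"
  by (simp add: matrix_scalar_ac scalar_matrix_assoc)
lemma mm_add_right: "(A + B) ** (C::complex^'p^'n) = A ** C + B ** C"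
  by (simp add: vec_eq_iff matrix_matrix_mult_def algebra_simps sum.distrib)

lemma bbl_mm: "bounded_bilinear ((**) :: complex^'n^'m \<Rightarrow> complex^'p^'n \<Rightarrow> complex^'p^'m)"
  unfolding bilinear_conv_bounded_bilinear[symmetric] bilinear_def
  by (auto intro!: linearI simp: matrix_add_ldistrib mm_add_right mm_scaleR_left mm_scaleR_right)

lemma vd_mm:
  assumes "(f has_vector_derivative f') (at x within s)" "(g has_vector_derivative g') (at x within s)"
  shows "((\<lambda>x. (f x :: complex^'n^'m) ** (g x :: complex^'p^'n)) has_vector_derivative (f x ** g' + f' ** g x)) (at x within s)"
  by (rule bounded_bilinear.has_vector_derivative[OF bbl_mm assms])

lemma quot_norm_eq:
  fixes f :: "real \<Rightarrow> 'a::real_normed_vector"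
  shows "\<forall>\<^sub>F y in at s. norm ((f y - f s) /\<^sub>R (y - s) - f') = norm ((f y - f s - (y - s) *\<^sub>R f') /\<^sub>R norm (y - s))"
proof -
  have "norm ((f y - f s) /\<^sub>R (y - s) - f') = norm ((f y - f s - (y - s) *\<^sub>R f') /\<^sub>R norm (y - s))"
    if "y \<noteq> s" for y
  proof -
    have ne: "y - s \<noteq> 0" using that by simp
    have "(f y - f s) /\<^sub>R (y - s) - f' = (inverse (y - s)) *\<^sub>R (f y - f s - (y - s) *\<^sub>R f')"
      using ne by (simp add: scaleR_diff_right)
    then show ?thesis by simp
  qed
  then show ?thesis unfolding eventually_at_filter by (auto intro: always_eventually)
qed

lemma vd_quot_iff:
  fixes f :: "real \<Rightarrow> 'a::real_normed_vector"
  shows "(f has_vector_derivative f') (at s) \<longleftrightarrow> ((\<lambda>y. (f y - f s) /\<^sub>R (y - s)) \<longlongrightarrow> f') (at s)"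
proof -
  have "(f has_vector_derivative f') (at s) \<longleftrightarrow> ((\<lambda>y. (f y - f s - (y - s) *\<^sub>R f') /\<^sub>R norm (y - s)) \<longlongrightarrow> 0) (at s)"
    unfolding has_vector_derivative_def has_derivative_at_within
    by (simp add: bounded_linear_scaleR_left)
  also have "\<dots> \<longleftrightarrow> ((\<lambda>y. norm ((f y - f s - (y - s) *\<^sub>R f') /\<^sub>R norm (y - s))) \<longlongrightarrow> 0) (at s)"
    by (rule tendsto_norm_zero_iff[symmetric])
  also have "\<dots> \<longleftrightarrow> ((\<lambda>y. norm ((f y - f s) /\<^sub>R (y - s) - f')) \<longlongrightarrow> 0) (at s)"
    by (rule tendsto_cong, rule eventually_mono[OF quot_norm_eq[where f=f and s=s and f'=f']]) simp
  also have "\<dots> \<longleftrightarrow> ((\<lambda>y. (f y - f s) /\<^sub>R (y - s)) \<longlongrightarrow> f') (at s)"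
    by (simp add: LIM_zero_iff tendsto_norm_zero_iff)
  finally show ?thesis .
qed

lemma vd_quot:
  fixes f :: "real \<Rightarrow> 'a::real_normed_vector"
  assumes "((\<lambda>y. (f y - f s) /\<^sub>R (y - s)) \<longlongrightarrow> f') (at s)"
  shows "(f has_vector_derivative f') (at s)"
  using assms vd_quot_iff by blast

lemma mm_diff_right: "(A - B) ** (C::complex^'p^'n) = A ** C - B ** C"
  by (simp add: vec_eq_iff matrix_matrix_mult_def algebra_simps sum_subtractf)
lemma mm_diff_left: "(C::complex^'n^'m) ** (A - B) = C ** A - C ** B"
  by (simp add: vec_eq_iff matrix_matrix_mult_def algebra_simps sum_subtractf)
lemma mm_neg_left: "(- A) ** (C::complex^'p^'n) = - (A ** C)"
  by (simp add: vec_eq_iff matrix_matrix_mult_def sum_negf)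
lemma mm_neg_right: "(C::complex^'n^'m) ** (- A) = - (C ** A)"
  by (simp add: vec_eq_iff matrix_matrix_mult_def sum_negf)

lemma vd_inv:
  fixes F :: "real \<Rightarrow> complex^'n^'n"
  assumes d: "(F has_vector_derivative F') (at s)" and i: "invertible (F s)"
  shows "((\<lambda>y. matrix_inv (F y)) has_vector_derivative - (matrix_inv (F s) ** F' ** matrix_inv (F s))) (at s)"
proof (rule vd_quot)
  let ?G = "\<lambda>y. matrix_inv (F y)"
  have cF: "isCont F s" using d has_vector_derivative_continuous by blast
  have cG: "isCont ?G s" using continuous_at_compose[OF cF minv_cont[OF i]] by (simp add: o_def)
  have ev: "\<forall>\<^sub>F y in at s. invertible (F y)"
  proof -
    have "\<forall>\<^sub>F y in at s. F y \<in> {A. det A \<noteq> 0}"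
      using topological_tendstoD[OF cF[unfolded isCont_def] open_det_nz] i invertible_det_nz by blast
    then show ?thesis by (rule eventually_mono) (simp add: invertible_det_nz)
  qed
  have q: "((\<lambda>y. (F y - F s) /\<^sub>R (y - s)) \<longlongrightarrow> F') (at s)"
    using d vd_quot_iff by blast
  have "((\<lambda>y. - (?G y ** ((F y - F s) /\<^sub>R (y - s)) ** ?G s)) \<longlongrightarrow> - (?G s ** F' ** ?G s)) (at s)"
    by (rule tendsto_minus[OF bounded_bilinear.tendsto[OF bbl_mm bounded_bilinear.tendsto[OF bbl_mm cG[unfolded isCont_def] q] tendsto_const]])
  then show "((\<lambda>y. (?G y - ?G s) /\<^sub>R (y - s)) \<longlongrightarrow> - (?G s ** F' ** ?G s)) (at s)"
  proof (rule tendsto_cong[THEN iffD1, rotated])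
    show "\<forall>\<^sub>F y in at s. - (?G y ** ((F y - F s) /\<^sub>R (y - s)) ** ?G s) = (?G y - ?G s) /\<^sub>R (y - s)"
      using ev
    proof (rule eventually_mono)
      fix y assume iy: "invertible (F y)"
      have "?G y - ?G s = - (?G y ** (F y - F s) ** ?G s)"
      proof -
        have "?G y ** (F y - F s) ** ?G s = ?G y ** F y ** ?G s - ?G y ** F s ** ?G s"
          by (simp add: mm_diff_left mm_diff_right)
        also have "\<dots> = ?G s - ?G y"
          by (simp add: minv_l[OF iy] flip: matrix_mul_assoc) (simp add: minv_r[OF i])
        finally show ?thesis by simp
      qed
      then show "- (?G y ** ((F y - F s) /\<^sub>R (y - s)) ** ?G s) = (?G y - ?G s) /\<^sub>R (y - s)"
        by (simp add: mm_scaleR_left mm_scaleR_right)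
    qed
  qed
qed

lemma Abs_sqm_add: "Abs_sqm (A + B) = Abs_sqm A + Abs_sqm B"
  by (metis Rep_sqm_add Rep_sqm_inverse Abs_sqm_inverse UNIV_I)
lemma Abs_sqm_scaleR: "Abs_sqm (r *\<^sub>R A) = r *\<^sub>R Abs_sqm A"
  by (metis Rep_sqm_scaleR Rep_sqm_inverse Abs_sqm_inverse UNIV_I)
lemma Abs_sqm_mult: "Abs_sqm (A ** B) = Abs_sqm A * Abs_sqm B"
  by (metis Rep_sqm_mult Rep_sqm_inverse Abs_sqm_inverse UNIV_I)
lemma Abs_sqm_uminus: "Abs_sqm (- A) = - Abs_sqm A"
  by (metis Abs_sqm_scaleR scaleR_minus1_left)
lemma Abs_sqm_zero: "Abs_sqm 0 = 0"
  by (metis Abs_sqm_scaleR scaleR_zero_left)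
lemma Abs_sqm_inj: "Abs_sqm A = Abs_sqm B \<Longrightarrow> A = B"
  by (metis Abs_sqm_inverse UNIV_I)

lemma sqm_comm_power: "(b::'n::finite sqm) * m = m * b \<Longrightarrow> b * m ^ k = m ^ k * b"
  by (induction k) (simp_all, metis mult.assoc)

lemma sqm_exp_comm: assumes "(b::'n::finite sqm) * m = m * b" shows "b * exp m = exp m * b"
proof -
  have s: "summable (\<lambda>k. m^k /\<^sub>R fact k)" by (rule summable_exp_generic)
  have "b * exp m = (\<Sum>k. b * (m^k /\<^sub>R fact k))" unfolding exp_def by (rule suminf_mult[OF s, symmetric])
  also have "\<dots> = (\<Sum>k. (m^k /\<^sub>R fact k) * b)"
    using sqm_comm_power[OF assms] by (simp add: mult_scaleR_right mult_scaleR_left)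
  also have "\<dots> = exp m * b" unfolding exp_def by (rule suminf_mult2[OF s, symmetric])
  finally show ?thesis .
qed

lemma mexp_comm: assumes "B ** M = M ** (B::complex^'n^'n)" shows "B ** mexp M = mexp M ** B"
proof -
  have "Abs_sqm B * Abs_sqm M = Abs_sqm M * Abs_sqm B" using assms by (simp flip: Abs_sqm_mult)
  then have "Abs_sqm B * exp (Abs_sqm M) = exp (Abs_sqm M) * Abs_sqm B" by (rule sqm_exp_comm)
  then have "Rep_sqm (Abs_sqm B * exp (Abs_sqm M)) = Rep_sqm (exp (Abs_sqm M) * Abs_sqm B)" by simp
  then show ?thesis by (simp add: Rep_sqm_mult mexp_sqm Abs_sqm_inverse)
qed

lemma mexp_inv: "mexp M ** mexp (- M) = mat 1"
proof -
  have "exp (Abs_sqm M) * exp (- Abs_sqm M) = 1"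
    by (simp flip: exp_add_commuting)
  then have "Rep_sqm (exp (Abs_sqm M) * exp (- Abs_sqm M)) = mat 1" by (simp add: Rep_sqm_one)
  then show ?thesis by (simp add: Rep_sqm_mult mexp_sqm Abs_sqm_uminus)
qed

lemma invertible_mexp: "invertible (mexp (M::complex^'n^'n))"
  using mexp_inv invertible_right_inverse by blast

lemma minv_mexp: "matrix_inv (mexp (M::complex^'n^'n)) = mexp (- M)"
  by (rule minv_unique[OF mexp_inv])

lemma mexp_vd:
  assumes "M ** N = N ** (M::complex^'n^'n)"
  shows "((\<lambda>s. mexp (M + s *\<^sub>R N)) has_vector_derivative N ** mexp (M + s *\<^sub>R N)) (at s within X)"
proof -
  let ?m = "Abs_sqm M" and ?n = "Abs_sqm N"
  have c: "(s' *\<^sub>R ?n) * ?m = ?m * (s' *\<^sub>R ?n)" for s'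
    using assms by (simp flip: Abs_sqm_mult)
  have e: "mexp (M + s' *\<^sub>R N) = Rep_sqm (exp (s' *\<^sub>R ?n) * exp ?m)" for s'
    by (simp add: mexp_sqm Abs_sqm_add Abs_sqm_scaleR exp_add_commuting[OF c, symmetric] add.commute)
  have "((\<lambda>s. exp (s *\<^sub>R ?n) * exp ?m) has_vector_derivative (?n * exp (s *\<^sub>R ?n)) * exp ?m) (at s within X)"
    by (rule has_vector_derivative_mult_left[OF has_vector_derivative_at_within[OF exp_scaleR_has_vector_derivative_left]])
  then have "((\<lambda>s. Rep_sqm (exp (s *\<^sub>R ?n) * exp ?m)) has_vector_derivative Rep_sqm ((?n * exp (s *\<^sub>R ?n)) * exp ?m)) (at s within X)"
    by (rule bounded_linear.has_vector_derivative[OF bl_Rep_sqm])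
  moreover have "Rep_sqm ((?n * exp (s *\<^sub>R ?n)) * exp ?m) = N ** mexp (M + s *\<^sub>R N)"
    by (simp add: e Rep_sqm_mult Abs_sqm_inverse mult.assoc)
  ultimately show ?thesis by (simp add: e)
qed

lemma mconj_mult: "mconj ((A::complex^'n^'m) ** (B::complex^'p^'n)) = mconj A ** mconj B"
  by (simp add: mconj_def matrix_matrix_mult_def vec_eq_iff)
lemma mconj_add: "mconj (A + B) = mconj A + mconj B"
  by (simp add: mconj_def vec_eq_iff)
lemma mconj_diff: "mconj (A - B) = mconj A - mconj B"
  by (simp add: mconj_def vec_eq_iff)
lemma mconj_neg: "mconj (- A) = - mconj A"
  by (simp add: mconj_def vec_eq_iff)
lemma mconj_scaleR: "mconj (r *\<^sub>R A) = r *\<^sub>R mconj A"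
  by (simp add: mconj_def vec_eq_iff)
lemma mconj_mconj: "mconj (mconj A) = A"
  by (simp add: mconj_def vec_eq_iff)
lemma mconj_mat1: "mconj (mat 1) = mat 1"
  by (simp add: mconj_def vec_eq_iff mat_def)
lemma mconj_zero: "mconj 0 = 0"
  by (simp add: mconj_def vec_eq_iff)
lemma mconj_csc: "mconj (csc c A) = csc (cnj c) (mconj A)"
  by (simp add: mconj_def csc_def vec_eq_iff)
lemma invertible_mconj: "invertible A \<Longrightarrow> invertible (mconj (A::complex^'n^'m))"
  unfolding invertible_def by (metis mconj_mult mconj_mat1)
lemma mconj_minv: "invertible (A::complex^'n^'n) \<Longrightarrow> mconj (matrix_inv A) = matrix_inv (mconj A)"
  by (metis minv_unique minv_r mconj_mult mconj_mat1)

lemma bl_mconj: "bounded_linear (mconj :: complex^'n^'m \<Rightarrow> complex^'n^'m)"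
  unfolding linear_conv_bounded_linear[symmetric]
  by (rule linearI) (simp_all add: mconj_add mconj_scaleR)

lemma vd_mconj: "(f has_vector_derivative f') F \<Longrightarrow> ((\<lambda>x. mconj (f x :: complex^'n^'m)) has_vector_derivative mconj f') F"
  by (rule bounded_linear.has_vector_derivative[OF bl_mconj])

lemmas mm_norm = matrix_mul_assoc[symmetric] matrix_add_ldistrib mm_add_right mm_diff_left mm_diff_right
  mm_neg_left mm_neg_right mm_scaleR_left mm_scaleR_right

lemma cancel_r: "A ** B = mat 1 \<Longrightarrow> A ** (B ** Z) = (Z::complex^'p^'n)"
  by (simp add: matrix_mul_assoc)

lemma inv_simps:
  assumes "invertible (M::complex^'n^'n)"
  shows "M ** matrix_inv M = mat 1" "matrix_inv M ** M = mat 1"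
    "\<And>Z::complex^'p^'n. M ** (matrix_inv M ** Z) = Z" "\<And>Z::complex^'p^'n. matrix_inv M ** (M ** Z) = Z"
  using minv_r[OF assms] minv_l[OF assms] by (simp_all add: cancel_r)

definition Am :: "real \<Rightarrow> complex^'n^'n \<Rightarrow> complex^'n^'n \<Rightarrow> complex^'n^'n" where
  "Am \<epsilon> K Xi = matrix_inv (mconj Xi) - \<epsilon> *\<^sub>R (mconj K ** Xi ** K)"
definition Bm :: "real \<Rightarrow> complex^'n^'n \<Rightarrow> complex^'n^'n \<Rightarrow> complex^'n^'n" where
  "Bm \<epsilon> K Xi = matrix_inv Xi - \<epsilon> *\<^sub>R (K ** mconj Xi ** mconj K)"

lemma Bm_conj: "invertible Xi \<Longrightarrow> mconj (Am \<epsilon> K Xi) = Bm \<epsilon> K Xi"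
  by (simp add: Am_def Bm_def mconj_diff mconj_scaleR mconj_mult mconj_minv invertible_mconj mconj_mconj)

lemma ok_facts:
  fixes Xi K :: "complex^'n^'n"
  assumes "inv_ok \<epsilon> K Xi"
  shows "invertible Xi" "invertible (mconj Xi)" "invertible (Am \<epsilon> K Xi)" "invertible (Bm \<epsilon> K Xi)"
  using assms by (auto simp: inv_ok_def Am_def Bm_def)

lemma R2:
  fixes Xi K :: "complex^'n^'n"
  assumes ok: "inv_ok \<epsilon> K Xi"
  shows "matrix_inv (Am \<epsilon> K Xi) ** (mconj K ** Xi) = mconj Xi ** (mconj K ** matrix_inv (Bm \<epsilon> K Xi))"
proof -
  note f = ok_facts[OF ok]
  define Th where "Th = mconj Xi"
  define L where "L = mconj K"
  define A where "A = Am \<epsilon> K Xi"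
  define B where "B = Bm \<epsilon> K Xi"
  have c1: "matrix_inv Th ** (Th ** Z) = Z" for Z :: "complex^'p^'n"
    by (rule cancel_r[OF minv_l]) (simp add: Th_def f)
  have c2: "Xi ** (matrix_inv Xi ** Z) = Z" for Z :: "complex^'p^'n"
    by (rule cancel_r[OF minv_r]) (simp add: f)
  have e: "A ** (Th ** L) = L ** (Xi ** B)"
    unfolding A_def B_def Am_def Bm_def Th_def[symmetric] L_def[symmetric]
    by (simp add: mm_norm c1 c2 minv_r f)
  have "matrix_inv A ** (A ** (Th ** L)) ** matrix_inv B = matrix_inv A ** (L ** (Xi ** B)) ** matrix_inv B"
    by (simp add: e)
  then show ?thesis
    by (simp add: mm_norm inv_simps[OF f(3)] inv_simps[OF f(4)] A_def B_def Th_def L_def)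
qed

lemma minv_mult: fixes A B :: "complex^'n^'n" assumes "invertible A" "invertible B"
  shows "matrix_inv (A ** B) = matrix_inv B ** matrix_inv A"
  by (rule minv_unique) (simp add: mm_norm inv_simps[OF assms(1)] inv_simps[OF assms(2)])

lemma comm_inv: "A ** B = B ** A \<Longrightarrow> invertible (A::complex^'n^'n) \<Longrightarrow> matrix_inv A ** B = B ** matrix_inv A"
proof -
  assume c: "A ** B = B ** A" and i: "invertible A"
  have "matrix_inv A ** B = matrix_inv A ** (B ** (A ** matrix_inv A))" by (simp add: inv_simps[OF i])
  also have "\<dots> = matrix_inv A ** (A ** B) ** matrix_inv A" by (simp add: matrix_mul_assoc c)
  also have "\<dots> = B ** matrix_inv A" by (simp add: mm_norm inv_simps[OF i])
  finally show ?thesis .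
qed

lemma comm_r: "A ** B = B ** A \<Longrightarrow> A ** (B ** Z) = B ** (A ** (Z::complex^'p^'n))"
  by (simp add: matrix_mul_assoc)

abbreviation "Rm \<epsilon> K Xi \<equiv> matrix_inv (Am \<epsilon> K Xi)"
abbreviation "Qm \<epsilon> K Xi \<equiv> matrix_inv (Bm \<epsilon> K Xi)"

lemma R2': assumes ok: "inv_ok \<epsilon> K Xi"
  shows "mconj Xi ** (mconj K ** (Qm \<epsilon> K Xi ** Z)) = Rm \<epsilon> K Xi ** (mconj K ** (Xi ** Z))"
proof -
  have "mconj Xi ** (mconj K ** (Qm \<epsilon> K Xi ** Z)) = (mconj Xi ** (mconj K ** Qm \<epsilon> K Xi)) ** Z"
    by (simp add: matrix_mul_assoc)
  also have "\<dots> = (Rm \<epsilon> K Xi ** (mconj K ** Xi)) ** Z" by (simp add: R2[OF ok])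
  also have "\<dots> = Rm \<epsilon> K Xi ** (mconj K ** (Xi ** Z))" by (simp add: matrix_mul_assoc)
  finally show ?thesis .
qed

lemma R2'': "inv_ok \<epsilon> K Xi \<Longrightarrow> mconj Xi ** (mconj K ** Qm \<epsilon> K Xi) = Rm \<epsilon> K Xi ** (mconj K ** Xi)"
  using R2[of \<epsilon> K Xi] by simp

lemma mconj_R: "inv_ok \<epsilon> K Xi \<Longrightarrow> mconj (Rm \<epsilon> K Xi) = Qm \<epsilon> K Xi"
  by (simp add: mconj_minv[OF ok_facts(3)] Bm_conj[OF ok_facts(1)])
lemma mconj_Q: "inv_ok \<epsilon> K Xi \<Longrightarrow> mconj (Qm \<epsilon> K Xi) = Rm \<epsilon> K Xi"
  by (metis mconj_R mconj_mconj)

lemma R2c: "inv_ok \<epsilon> K Xi \<Longrightarrow> Qm \<epsilon> K Xi ** (K ** mconj Xi) = Xi ** (K ** Rm \<epsilon> K Xi)"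
proof -
  assume ok: "inv_ok \<epsilon> K Xi"
  have "mconj (Rm \<epsilon> K Xi ** (mconj K ** Xi)) = mconj (mconj Xi ** (mconj K ** Qm \<epsilon> K Xi))"
    using R2[OF ok] by simp
  then show ?thesis by (simp add: mconj_mult mconj_R[OF ok] mconj_Q[OF ok] mconj_mconj)
qed

lemma R2c': assumes ok: "inv_ok \<epsilon> K Xi"
  shows "Qm \<epsilon> K Xi ** (K ** (mconj Xi ** Z)) = Xi ** (K ** (Rm \<epsilon> K Xi ** Z))"
proof -
  have "Qm \<epsilon> K Xi ** (K ** (mconj Xi ** Z)) = (Qm \<epsilon> K Xi ** (K ** mconj Xi)) ** Z"
    by (simp add: matrix_mul_assoc)
  also have "\<dots> = (Xi ** (K ** Rm \<epsilon> K Xi)) ** Z" by (simp add: R2c[OF ok])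
  also have "\<dots> = Xi ** (K ** (Rm \<epsilon> K Xi ** Z))" by (simp add: matrix_mul_assoc)
  finally show ?thesis .
qed

lemma psol_R: "inv_ok \<epsilon> K Xi \<Longrightarrow> psol \<epsilon> U V K Xi = \<epsilon> *\<^sub>R (U ** (Rm \<epsilon> K Xi ** (mconj K ** (Xi ** V))))"
  unfolding psol_def Bm_def[symmetric] by (simp add: mm_norm R2')

lemma qsol_R: "qsol \<sigma> \<epsilon> U V K Xi = \<sigma> *\<^sub>R (U ** (Rm \<epsilon> K Xi ** mconj V))"
  unfolding qsol_def Am_def[symmetric] by (simp add: mm_norm)

lemma qsol_conj: "inv_ok \<epsilon> K Xi \<Longrightarrow> mconj (qsol \<sigma> \<epsilon> U V K Xi) = \<sigma> *\<^sub>R (mconj U ** (Qm \<epsilon> K Xi ** V))"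
  by (simp add: qsol_R mconj_scaleR mconj_mult mconj_R mconj_mconj)

lemma psol_conj: "inv_ok \<epsilon> K Xi \<Longrightarrow> mconj (psol \<epsilon> U V K Xi) = \<epsilon> *\<^sub>R (mconj U ** (Xi ** (K ** (Rm \<epsilon> K Xi ** mconj V))))"
proof -
  assume ok: "inv_ok \<epsilon> K Xi"
  have "mconj (psol \<epsilon> U V K Xi) = \<epsilon> *\<^sub>R (mconj U ** (Qm \<epsilon> K Xi ** (K ** (mconj Xi ** mconj V))))"
    by (simp add: psol_R[OF ok] mconj_scaleR mconj_mult mconj_R[OF ok] mconj_mconj)
  then show ?thesis by (simp add: R2c'[OF ok])
qed

lemma Q_expand: "inv_ok \<epsilon> K Xi \<Longrightarrow> Qm \<epsilon> K Xi = Xi + \<epsilon> *\<^sub>R (Xi ** (K ** (Rm \<epsilon> K Xi ** (mconj K ** Xi))))"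
proof -
  assume ok: "inv_ok \<epsilon> K Xi"
  note f = ok_facts[OF ok]
  have "Xi ** (Bm \<epsilon> K Xi ** Qm \<epsilon> K Xi) = Xi" by (simp add: inv_simps[OF f(4)])
  then have "Qm \<epsilon> K Xi - \<epsilon> *\<^sub>R (Xi ** (K ** (mconj Xi ** (mconj K ** Qm \<epsilon> K Xi)))) = Xi"
    unfolding Bm_def by (simp add: mm_norm inv_simps[OF f(1)])
  then show ?thesis by (simp add: R2''[OF ok] algebra_simps)
qed

lemma shift_lemmas:
  fixes S K Xi :: "complex^'n^'n" and U :: "complex^'n^'m" and V :: "complex^'m^'n" and \<epsilon> \<sigma> :: real
  assumes eps: "\<epsilon> * \<epsilon> = 1" and sig: "\<sigma> * \<sigma> = 1" and iS: "invertible S"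
    and Sy: "matrix_inv S ** K - K ** mconj S = V ** U"
    and cm: "S ** Xi = Xi ** S"
    and ok0: "inv_ok \<epsilon> K Xi" and ok1: "inv_ok \<epsilon> K (S ** Xi)"
  shows "psol \<epsilon> U V K (S ** Xi) - psol \<epsilon> U V K Xi = - \<epsilon> *\<^sub>R (qsol \<sigma> \<epsilon> U V K (S ** Xi) ** mconj (qsol \<sigma> \<epsilon> U V K Xi))"
    and "qsol \<sigma> \<epsilon> U V K (S ** Xi) + psol \<epsilon> U V K (S ** Xi) ** qsol \<sigma> \<epsilon> U V K Xi
           = \<sigma> *\<^sub>R (U ** (mconj S ** (Rm \<epsilon> K Xi ** mconj V)))"
    and "\<sigma> *\<^sub>R (U ** (Rm \<epsilon> K (S ** Xi) ** (matrix_inv (mconj S) ** mconj V)))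
           = qsol \<sigma> \<epsilon> U V K Xi - qsol \<sigma> \<epsilon> U V K (S ** Xi) ** mconj (psol \<epsilon> U V K Xi)"
proof -
  note f0 = ok_facts[OF ok0] and f1 = ok_facts[OF ok1]
  define T where "T = mconj S"
  define Ti where "Ti = matrix_inv T"
  define L where "L = mconj K"
  define X where "X = mconj U"
  define Y where "Y = mconj V"
  define Th where "Th = mconj Xi"
  define Thi where "Thi = matrix_inv Th"
  have iA': "invertible (Am \<epsilon> K Xi)" "invertible (Am \<epsilon> K (S ** Xi))" "invertible (Bm \<epsilon> K Xi)" using f0 f1 by simp_all
  define A where "A = Am \<epsilon> K Xi"
  define A1 where "A1 = Am \<epsilon> K (S ** Xi)"
  define B where "B = Bm \<epsilon> K Xi"
  define R where "R = matrix_inv A"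
  define R1 where "R1 = matrix_inv A1"
  define Q where "Q = matrix_inv B"
  have iR: "R ** (A ** Z) = Z" "A ** (R ** Z) = Z" "R ** A = mat 1" "A ** R = mat 1" for Z :: "complex^'p^'n"
    using inv_simps[OF iA'(1)] by (simp_all add: R_def A_def)
  have iR1: "R1 ** (A1 ** Z) = Z" "A1 ** (R1 ** Z) = Z" "R1 ** A1 = mat 1" "A1 ** R1 = mat 1" for Z :: "complex^'p^'n"
    using inv_simps[OF iA'(2)] by (simp_all add: R1_def A1_def)
  have iQ: "Q ** (B ** Z) = Z" "B ** (Q ** Z) = Z" "Q ** B = mat 1" "B ** Q = mat 1" for Z :: "complex^'p^'n"
    using inv_simps[OF iA'(3)] by (simp_all add: Q_def B_def)
  have iT: "invertible T" unfolding T_def by (rule invertible_mconj[OF iS])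
  have iTh: "invertible Th" unfolding Th_def by (rule f0(2))
  have cSy: "Ti ** L = Y ** X + L ** S"
  proof -
    have "mconj (matrix_inv S ** K - K ** mconj S) = mconj (V ** U)" using Sy by simp
    then have "Ti ** L - L ** S = Y ** X"
      by (simp add: mconj_diff mconj_mult mconj_minv[OF iS] mconj_mconj Ti_def T_def L_def X_def Y_def)
    then show ?thesis by (simp add: algebra_simps)
  qed
  have cSyr: "Ti ** (L ** Z) = Y ** (X ** Z) + L ** (S ** Z)" for Z :: "complex^'p^'n"
    by (simp add: matrix_mul_assoc cSy mm_add_right)
  have Sy2: "S ** (K ** T) = K - S ** (V ** U)"
  proof -
    have "S ** (matrix_inv S ** K - K ** T) = S ** (V ** U)" using Sy by (simp add: T_def)
    then show ?thesis by (simp add: mm_diff_left inv_simps[OF iS] algebra_simps)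
  qed
  have cT: "T ** Th = Th ** T" unfolding T_def Th_def by (metis cm mconj_mult)
  have cTiTh: "Ti ** Th = Th ** Ti" unfolding Ti_def by (rule comm_inv[OF cT iT])
  have cThiTi: "Thi ** Ti = Ti ** Thi" unfolding Thi_def by (rule comm_inv[OF cTiTh[symmetric] iTh])
  have cSXr: "S ** (Xi ** Z) = Xi ** (S ** Z)" for Z :: "complex^'p^'n" by (rule comm_r[OF cm])
  have cTiThr: "Ti ** (Th ** Z) = Th ** (Ti ** Z)" for Z :: "complex^'p^'n" by (rule comm_r[OF cTiTh])
  have Aform: "A = Thi - \<epsilon> *\<^sub>R (L ** (Xi ** K))"
    by (simp add: A_def Am_def Thi_def Th_def L_def mm_norm)
  have A1form: "A1 = Thi ** Ti - \<epsilon> *\<^sub>R (L ** (S ** (Xi ** K)))"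
    by (simp add: A1_def Am_def Thi_def Th_def L_def Ti_def T_def mm_norm mconj_mult minv_mult[OF invertible_mconj[OF iS] f0(2)])
  have Bform: "B = matrix_inv Xi - \<epsilon> *\<^sub>R (K ** (Th ** L))"
    by (simp add: B_def Bm_def Th_def L_def mm_norm)
  have R2a: "Th ** (L ** Q) = R ** (L ** Xi)"
    unfolding Th_def L_def Q_def R_def A_def B_def by (rule R2''[OF ok0])
  have qR: "qsol \<sigma> \<epsilon> U V K Z = \<sigma> *\<^sub>R (U ** (Rm \<epsilon> K Z ** Y))" for Z by (simp add: qsol_R Y_def)
  have st1: "L ** (S ** (Xi ** B)) - A1 ** (Th ** L) = - (Y ** X)"
    unfolding Bform A1form
    by (simp add: mm_norm inv_simps[OF f0(1)] inv_simps[OF iTh] cTiThr Thi_def cSy algebra_simps)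
  have st2: "R1 ** (L ** (S ** Xi)) - R ** (L ** Xi) = - (R1 ** (Y ** (X ** Q)))"
  proof -
    have "R1 ** (L ** (S ** (Xi ** B)) - A1 ** (Th ** L)) ** Q = R1 ** (- (Y ** X)) ** Q" by (simp add: st1)
    then show ?thesis
      by (simp add: mm_norm iR1 iQ R2a)
  qed
  show "psol \<epsilon> U V K (S ** Xi) - psol \<epsilon> U V K Xi = - \<epsilon> *\<^sub>R (qsol \<sigma> \<epsilon> U V K (S ** Xi) ** mconj (qsol \<sigma> \<epsilon> U V K Xi))"
  proof -
    have "psol \<epsilon> U V K (S ** Xi) - psol \<epsilon> U V K Xi = \<epsilon> *\<^sub>R (U ** ((R1 ** (L ** (S ** Xi)) - R ** (L ** Xi)) ** V))"
      by (simp add: psol_R[OF ok0] psol_R[OF ok1] mm_norm R1_def R_def A_def A1_def L_def scaleR_diff_right)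
    also have "\<dots> = - \<epsilon> *\<^sub>R (U ** (R1 ** (Y ** (X ** (Q ** V)))))" by (simp add: st2 mm_norm)
    also have "\<dots> = - \<epsilon> *\<^sub>R (qsol \<sigma> \<epsilon> U V K (S ** Xi) ** mconj (qsol \<sigma> \<epsilon> U V K Xi))"
      by (simp only: qsol_conj[OF ok0]) (simp add: qR mm_norm sig R1_def A1_def Q_def B_def X_def)
    finally show ?thesis .
  qed
  have st3: "A1 ** T = A + \<epsilon> *\<^sub>R (L ** (S ** (Xi ** (V ** U))))"
    unfolding A1form Aform
    by (simp add: mm_norm Ti_def inv_simps[OF iT] cSXr Sy2 algebra_simps)
  have st4: "R1 = T ** R - \<epsilon> *\<^sub>R (R1 ** (L ** (S ** (Xi ** (V ** (U ** R))))))"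
  proof -
    have "R1 ** (A1 ** T) ** R = R1 ** (A + \<epsilon> *\<^sub>R (L ** (S ** (Xi ** (V ** U))))) ** R" by (simp add: st3)
    then show ?thesis
      by (simp add: mm_norm iR iR1 algebra_simps)
  qed
  show "qsol \<sigma> \<epsilon> U V K (S ** Xi) + psol \<epsilon> U V K (S ** Xi) ** qsol \<sigma> \<epsilon> U V K Xi
           = \<sigma> *\<^sub>R (U ** (mconj S ** (Rm \<epsilon> K Xi ** mconj V)))"
  proof -
    have "qsol \<sigma> \<epsilon> U V K (S ** Xi) = \<sigma> *\<^sub>R (U ** (R1 ** Y))" by (simp add: qR R1_def A1_def)
    also have "\<dots> = \<sigma> *\<^sub>R (U ** ((T ** R - \<epsilon> *\<^sub>R (R1 ** (L ** (S ** (Xi ** (V ** (U ** R))))))) ** Y))"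
      by (subst st4) simp
    finally have e: "qsol \<sigma> \<epsilon> U V K (S ** Xi) = \<dots>" .
    show ?thesis
      by (simp only: e) (simp add: psol_R[OF ok1] qR mm_norm R1_def A1_def R_def A_def T_def L_def Y_def algebra_simps)
  qed
  have st5: "A1 = Ti ** A + \<epsilon> *\<^sub>R (Y ** (X ** (Xi ** K)))"
    unfolding A1form Aform
    by (simp add: mm_norm cThiTi cSXr cSyr algebra_simps)
  have st6: "R = R1 ** Ti + \<epsilon> *\<^sub>R (R1 ** (Y ** (X ** (Xi ** (K ** R)))))"
  proof -
    have "R1 ** A1 ** R = R1 ** (Ti ** A + \<epsilon> *\<^sub>R (Y ** (X ** (Xi ** K)))) ** R" by (simp add: st5)
    then show ?thesis
      by (simp add: mm_norm iR iR1)
  qed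
  show "\<sigma> *\<^sub>R (U ** (Rm \<epsilon> K (S ** Xi) ** (matrix_inv (mconj S) ** mconj V)))
           = qsol \<sigma> \<epsilon> U V K Xi - qsol \<sigma> \<epsilon> U V K (S ** Xi) ** mconj (psol \<epsilon> U V K Xi)"
  proof -
    have "qsol \<sigma> \<epsilon> U V K Xi = \<sigma> *\<^sub>R (U ** (R ** Y))" by (simp add: qR R_def A_def)
    also have "\<dots> = \<sigma> *\<^sub>R (U ** ((R1 ** Ti + \<epsilon> *\<^sub>R (R1 ** (Y ** (X ** (Xi ** (K ** R)))))) ** Y))"
      by (subst st6) simp
    finally have e: "qsol \<sigma> \<epsilon> U V K Xi = \<dots>" .
    show ?thesis
      by (simp only: e psol_conj[OF ok0]) (simp add: qR mm_norm R1_def A1_def R_def A_def T_def Ti_def L_def X_def Y_def algebra_simps)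
  qed
qed

lemma vd_eq: "(f has_vector_derivative a) F \<Longrightarrow> a = b \<Longrightarrow> (f has_vector_derivative b) F" by simp

lemma vd_lmul: "(f has_vector_derivative f') F \<Longrightarrow> ((\<lambda>x. (C::complex^'n^'m) ** (f x :: complex^'p^'n)) has_vector_derivative C ** f') F"
  by (rule bounded_linear.has_vector_derivative[OF bounded_bilinear.bounded_linear_right[OF bbl_mm]])
lemma vd_rmul: "(f has_vector_derivative f') F \<Longrightarrow> ((\<lambda>x. (f x :: complex^'n^'m) ** (C::complex^'p^'n)) has_vector_derivative f' ** C) F"
  by (rule bounded_linear.has_vector_derivative[OF bounded_bilinear.bounded_linear_left[OF bbl_mm]])
lemma vd_scale: "(f has_vector_derivative f') F \<Longrightarrow> ((\<lambda>x. c *\<^sub>R (f x :: 'a::real_normed_vector)) has_vector_derivative c *\<^sub>R f') F"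
  by (rule bounded_linear.has_vector_derivative[OF bounded_linear_scaleR_right])

definition dA :: "real \<Rightarrow> complex^'n^'n \<Rightarrow> complex^'n^'n \<Rightarrow> complex^'n^'n \<Rightarrow> complex^'n^'n" where
  "dA \<epsilon> K Xi Xi' = - (matrix_inv (mconj Xi) ** (mconj Xi' ** matrix_inv (mconj Xi))) - \<epsilon> *\<^sub>R (mconj K ** (Xi' ** K))"

lemma vd_A:
  fixes Xi :: "real \<Rightarrow> complex^'n^'n"
  assumes d: "(Xi has_vector_derivative Xi') (at s)" and i: "invertible (mconj (Xi s))"
  shows "((\<lambda>y. Am \<epsilon> K (Xi y)) has_vector_derivative dA \<epsilon> K (Xi s) Xi') (at s)"
proof -
  have "((\<lambda>y. matrix_inv (mconj (Xi y))) has_vector_derivative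
        - (matrix_inv (mconj (Xi s)) ** mconj Xi' ** matrix_inv (mconj (Xi s)))) (at s)"
    by (rule vd_inv[OF vd_mconj[OF d] i])
  moreover have "((\<lambda>y. mconj K ** Xi y ** K) has_vector_derivative mconj K ** Xi' ** K) (at s)"
    by (rule vd_rmul[OF vd_lmul[OF d]])
  ultimately have "((\<lambda>y. matrix_inv (mconj (Xi y)) - \<epsilon> *\<^sub>R (mconj K ** Xi y ** K)) has_vector_derivative
        - (matrix_inv (mconj (Xi s)) ** mconj Xi' ** matrix_inv (mconj (Xi s))) - \<epsilon> *\<^sub>R (mconj K ** Xi' ** K)) (at s)"
    by (intro has_vector_derivative_diff vd_scale)
  then show ?thesis unfolding Am_def dA_def by (simp add: matrix_mul_assoc)
qed

lemma vd_q:
  fixes Xi :: "real \<Rightarrow> complex^'n^'n"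
  assumes d: "(Xi has_vector_derivative Xi') (at s)" and ok: "inv_ok \<epsilon> K (Xi s)"
  shows "((\<lambda>y. qsol \<sigma> \<epsilon> U V K (Xi y)) has_vector_derivative
     - (\<sigma> *\<^sub>R (U ** (Rm \<epsilon> K (Xi s) ** (dA \<epsilon> K (Xi s) Xi' ** (Rm \<epsilon> K (Xi s) ** mconj V)))))) (at s)"
proof -
  note f = ok_facts[OF ok]
  have "((\<lambda>y. Rm \<epsilon> K (Xi y)) has_vector_derivative - (Rm \<epsilon> K (Xi s) ** dA \<epsilon> K (Xi s) Xi' ** Rm \<epsilon> K (Xi s))) (at s)"
    by (rule vd_inv[OF vd_A[OF d f(2)] f(3)])
  then have "((\<lambda>y. \<sigma> *\<^sub>R (U ** (Rm \<epsilon> K (Xi y) ** mconj V))) has_vector_derivative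
     \<sigma> *\<^sub>R (U ** (- (Rm \<epsilon> K (Xi s) ** dA \<epsilon> K (Xi s) Xi' ** Rm \<epsilon> K (Xi s)) ** mconj V))) (at s)"
    by (intro vd_scale vd_lmul vd_rmul)
  then show ?thesis
    by (simp add: qsol_R mm_norm)
qed

definition dB :: "real \<Rightarrow> complex^'n^'n \<Rightarrow> complex^'n^'n \<Rightarrow> complex^'n^'n \<Rightarrow> complex^'n^'n" where
  "dB \<epsilon> K Xi Xi' = - (matrix_inv Xi ** Xi' ** matrix_inv Xi) - \<epsilon> *\<^sub>R (K ** mconj Xi' ** mconj K)"

lemma vd_p:
  fixes Xi :: "real \<Rightarrow> complex^'n^'n"
  assumes d: "(Xi has_vector_derivative Xi') (at s)" and ok: "inv_ok \<epsilon> K (Xi s)"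
  shows "((\<lambda>y. psol \<epsilon> U V K (Xi y)) has_vector_derivative
     \<epsilon> *\<^sub>R (U ** (mconj (Xi s) ** (mconj K ** (- (Qm \<epsilon> K (Xi s) ** dB \<epsilon> K (Xi s) Xi' ** Qm \<epsilon> K (Xi s))))
        + mconj Xi' ** (mconj K ** Qm \<epsilon> K (Xi s))) ** V)) (at s)"
proof -
  note f = ok_facts[OF ok]
  have d1: "((\<lambda>y. mconj (Xi y)) has_vector_derivative mconj Xi') (at s)" by (rule vd_mconj[OF d])
  have dB': "((\<lambda>y. Bm \<epsilon> K (Xi y)) has_vector_derivative dB \<epsilon> K (Xi s) Xi') (at s)"
    unfolding Bm_def dB_def
    by (rule has_vector_derivative_diff[OF vd_inv[OF d f(1)] vd_scale[OF vd_rmul[OF vd_lmul[OF d1]]]])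
  have dQ: "((\<lambda>y. Qm \<epsilon> K (Xi y)) has_vector_derivative - (Qm \<epsilon> K (Xi s) ** dB \<epsilon> K (Xi s) Xi' ** Qm \<epsilon> K (Xi s))) (at s)"
    by (rule vd_inv[OF dB' f(4)])
  have d2: "((\<lambda>y. mconj K ** Qm \<epsilon> K (Xi y)) has_vector_derivative mconj K ** (- (Qm \<epsilon> K (Xi s) ** dB \<epsilon> K (Xi s) Xi' ** Qm \<epsilon> K (Xi s)))) (at s)"
    by (rule vd_lmul[OF dQ])
  have d3: "((\<lambda>y. mconj (Xi y) ** (mconj K ** Qm \<epsilon> K (Xi y))) has_vector_derivative
      mconj (Xi s) ** (mconj K ** (- (Qm \<epsilon> K (Xi s) ** dB \<epsilon> K (Xi s) Xi' ** Qm \<epsilon> K (Xi s)))) + mconj Xi' ** (mconj K ** Qm \<epsilon> K (Xi s))) (at s)"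
    by (rule vd_mm[OF d1 d2])
  have d4: "((\<lambda>y. \<epsilon> *\<^sub>R (U ** (mconj (Xi y) ** (mconj K ** Qm \<epsilon> K (Xi y))) ** V)) has_vector_derivative
      \<epsilon> *\<^sub>R (U ** (mconj (Xi s) ** (mconj K ** (- (Qm \<epsilon> K (Xi s) ** dB \<epsilon> K (Xi s) Xi' ** Qm \<epsilon> K (Xi s)))) + mconj Xi' ** (mconj K ** Qm \<epsilon> K (Xi s))) ** V)) (at s)"
    by (rule vd_scale[OF vd_rmul[OF vd_lmul[OF d3]]])
  have e: "psol \<epsilon> U V K (Xi y) = \<epsilon> *\<^sub>R (U ** (mconj (Xi y) ** (mconj K ** Qm \<epsilon> K (Xi y))) ** V)" for y
    unfolding psol_def Bm_def by (simp add: matrix_mul_assoc)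
  show ?thesis unfolding e by (rule d4)
qed

lemma csc_scaleR: "csc c (r *\<^sub>R A) = r *\<^sub>R csc c A" by (simp add: csc_def vec_eq_iff scaleR_conv_of_real)
lemma csc_mult_left: "csc c (A::complex^'n^'m) ** (B::complex^'p^'n) = csc c (A ** B)"
  by (simp add: csc_def matrix_matrix_mult_def vec_eq_iff sum_distrib_left mult.assoc)
lemma csc_mult_right: "(A::complex^'n^'m) ** csc c (B::complex^'p^'n) = csc c (A ** B)"
  by (simp add: csc_def matrix_matrix_mult_def vec_eq_iff sum_distrib_left mult_ac)
lemma csc_add: "csc c (A + B) = csc c A + csc c B" by (simp add: csc_def vec_eq_iff algebra_simps)
lemma csc_diff: "csc c (A - B) = csc c A - csc c B" by (simp add: csc_def vec_eq_iff algebra_simps)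
lemma csc_neg: "csc c (- A) = - csc c A" by (simp add: csc_def vec_eq_iff)
lemma csc_csc: "csc c (csc d A) = csc (c * d) A" by (simp add: csc_def vec_eq_iff mult.assoc)
lemma csc_one: "csc 1 A = A" by (simp add: csc_def vec_eq_iff)
lemma csc_m1: "csc (-1) A = - A" by (simp add: csc_def vec_eq_iff)
lemma csc_ii: "csc \<i> (csc \<i> A) = - A" by (simp add: csc_csc csc_m1)
lemma csc_real: "csc (complex_of_real r) A = r *\<^sub>R A"
  apply (simp add: csc_def vec_eq_iff) by (simp add: scaleR_conv_of_real)
lemma csc_zero: "csc c 0 = 0" by (simp add: csc_def vec_eq_iff)

lemmas csc_norm = csc_scaleR csc_mult_left csc_mult_right csc_add csc_diff csc_neg csc_csc csc_ii

lemma mpow_comm: "B ** S = S ** B \<Longrightarrow> B ** mpow S k = mpow S k ** (B::complex^'n^'n)"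
  by (induction k) (simp_all, metis matrix_mul_assoc)

lemma mzpow_comm: assumes "invertible S" "B ** S = S ** B" shows "B ** mzpow S x = mzpow S x ** (B::complex^'n^'n)"
proof -
  have "B ** matrix_inv S = matrix_inv S ** B" using comm_inv[OF assms(2)[symmetric] assms(1)] by simp
  then show ?thesis unfolding mzpow_def using mpow_comm assms(2) by auto
qed

lemma mzpow_succ: assumes i: "invertible (S::complex^'n^'n)" shows "mzpow S (x + 1) = S ** mzpow S x"
proof (cases "0 \<le> x")
  case True
  then have "nat (x + 1) = Suc (nat x)" by simp
  then show ?thesis using True by (simp add: mzpow_def)
next
  case False
  then have n: "nat (- x) = Suc (nat (- (x + 1)))" by simp
  show ?thesis
  proof (cases "x + 1 = 0")
    case True
    then have "x = -1" by simp
    then show ?thesis by (simp add: mzpow_def inv_simps[OF i])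
  next
    case False
    with \<open>\<not> 0 \<le> x\<close> have "\<not> 0 \<le> x + 1" by simp
    then show ?thesis using \<open>\<not> 0 \<le> x\<close> by (simp add: mzpow_def n matrix_mul_assoc inv_simps[OF i])
  qed
qed

lemma mzpow_pred: assumes i: "invertible (S::complex^'n^'n)" shows "mzpow S x = S ** mzpow S (x - 1)"
  using mzpow_succ[OF i, of "x - 1"] by simp

lemma invertible_mzpow: assumes i: "invertible (S::complex^'n^'n)" shows "invertible (mzpow S x)"
proof -
  have i1: "invertible (mat 1 :: complex^'n^'n)" unfolding invertible_def by (rule exI[of _ "mat 1"]) simp
  have "invertible (mpow A k)" if "invertible A" for A :: "complex^'n^'n" and k
    by (induction k) (simp_all add: i1 invertible_mult[OF that])
  then show ?thesis unfolding mzpow_def using i invertible_minv by auto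
qed

lemma sd_core:
  fixes S K Xi :: "complex^'n^'n" and U :: "complex^'n^'m" and V :: "complex^'m^'n" and \<epsilon> \<sigma> :: real
  assumes eps: "\<epsilon> * \<epsilon> = 1" and sig: "\<sigma> * \<sigma> = 1" and iS: "invertible S"
    and Sy: "matrix_inv S ** K - K ** mconj S = V ** U"
    and cm: "S ** Xi = Xi ** S"
    and ok: "inv_ok \<epsilon> K Xi"
  shows "\<sigma> *\<^sub>R (U ** ((mconj S ** Rm \<epsilon> K Xi - 2 *\<^sub>R Rm \<epsilon> K Xi + Rm \<epsilon> K Xi ** matrix_inv (mconj S)
           - Rm \<epsilon> K Xi ** (((mconj S + matrix_inv (mconj S) - 2 *\<^sub>R mat 1) ** matrix_inv (mconj Xi)
                - \<epsilon> *\<^sub>R (mconj K ** ((S + matrix_inv S - 2 *\<^sub>R mat 1) ** (Xi ** K)))) ** Rm \<epsilon> K Xi)) ** mconj V))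
         = psol \<epsilon> U V K Xi ** qsol \<sigma> \<epsilon> U V K Xi - qsol \<sigma> \<epsilon> U V K Xi ** mconj (psol \<epsilon> U V K Xi)"
proof -
  note f0 = ok_facts[OF ok]
  define T where "T = mconj S"
  define Ti where "Ti = matrix_inv T"
  define Si where "Si = matrix_inv S"
  define L where "L = mconj K"
  define X where "X = mconj U"
  define Y where "Y = mconj V"
  define Th where "Th = mconj Xi"
  define Thi where "Thi = matrix_inv Th"
  define A where "A = Am \<epsilon> K Xi"
  define R where "R = matrix_inv A"
  have iA': "invertible (Am \<epsilon> K Xi)" using f0 by simp
  have iR: "R ** (A ** Z) = Z" "A ** (R ** Z) = Z" "R ** A = mat 1" "A ** R = mat 1" for Z :: "complex^'p^'n"
    using inv_simps[OF iA'] by (simp_all add: R_def A_def)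
  have iT: "invertible T" unfolding T_def by (rule invertible_mconj[OF iS])
  have iTh: "invertible Th" unfolding Th_def by (rule f0(2))
  have cSy: "Ti ** L = Y ** X + L ** S"
  proof -
    have "mconj (matrix_inv S ** K - K ** mconj S) = mconj (V ** U)" using Sy by simp
    then have "Ti ** L - L ** S = Y ** X"
      by (simp add: mconj_diff mconj_mult mconj_minv[OF iS] mconj_mconj Ti_def T_def L_def X_def Y_def)
    then show ?thesis by (simp add: algebra_simps)
  qed
  have cSyr: "Ti ** (L ** Z) = Y ** (X ** Z) + L ** (S ** Z)" for Z :: "complex^'p^'n"
    by (simp add: matrix_mul_assoc cSy mm_add_right)
  have Sy1: "Si ** K = V ** U + K ** T" using Sy by (simp add: Si_def T_def algebra_simps)
  have Syr: "Si ** (K ** Z) = V ** (U ** Z) + K ** (T ** Z)" for Z :: "complex^'p^'n"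
    using Sy1 by (simp add: matrix_mul_assoc mm_add_right)
  have cT: "T ** Th = Th ** T" unfolding T_def Th_def by (metis cm mconj_mult)
  have cThiT: "Thi ** T = T ** Thi" unfolding Thi_def by (rule comm_inv[OF cT[symmetric] iTh])
  have cSi: "Si ** Xi = Xi ** Si" unfolding Si_def by (rule comm_inv[OF cm iS])
  have cSXr: "S ** (Xi ** Z) = Xi ** (S ** Z)" for Z :: "complex^'p^'n" by (rule comm_r[OF cm])
  have cSiXr: "Si ** (Xi ** Z) = Xi ** (Si ** Z)" for Z :: "complex^'p^'n" by (rule comm_r[OF cSi])
  have Aform: "A = Thi - \<epsilon> *\<^sub>R (L ** (Xi ** K))"
    by (simp add: A_def Am_def Thi_def Th_def L_def mm_norm)
  define W where "W = (T + Ti - 2 *\<^sub>R mat 1) ** Thi - \<epsilon> *\<^sub>R (L ** ((S + Si - 2 *\<^sub>R mat 1) ** (Xi ** K)))"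
  have st1: "A ** T - 2 *\<^sub>R A + Ti ** A - W = \<epsilon> *\<^sub>R (L ** (Xi ** (V ** U))) - \<epsilon> *\<^sub>R (Y ** (X ** (Xi ** K)))"
    unfolding Aform W_def
    by (simp add: mm_norm cThiT cSyr Syr Sy1 cSXr cSiXr algebra_simps)
  have st2: "T ** R - 2 *\<^sub>R R + R ** Ti - R ** (W ** R)
      = \<epsilon> *\<^sub>R (R ** (L ** (Xi ** (V ** (U ** R))))) - \<epsilon> *\<^sub>R (R ** (Y ** (X ** (Xi ** (K ** R)))))"
  proof -
    have "R ** (A ** T - 2 *\<^sub>R A + Ti ** A - W) ** R
       = R ** (\<epsilon> *\<^sub>R (L ** (Xi ** (V ** U))) - \<epsilon> *\<^sub>R (Y ** (X ** (Xi ** K)))) ** R" by (simp add: st1)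
    then show ?thesis by (simp add: mm_norm iR)
  qed
  have qR: "qsol \<sigma> \<epsilon> U V K Xi = \<sigma> *\<^sub>R (U ** (R ** Y))" by (simp add: qsol_R Y_def R_def A_def)
  have pR: "psol \<epsilon> U V K Xi = \<epsilon> *\<^sub>R (U ** (R ** (L ** (Xi ** V))))"
    by (simp add: psol_R[OF ok] R_def A_def L_def)
  have pc: "mconj (psol \<epsilon> U V K Xi) = \<epsilon> *\<^sub>R (X ** (Xi ** (K ** (R ** Y))))"
    by (simp add: psol_conj[OF ok] R_def A_def X_def Y_def)
  have "\<sigma> *\<^sub>R (U ** ((T ** R - 2 *\<^sub>R R + R ** Ti - R ** (W ** R)) ** Y))
        = psol \<epsilon> U V K Xi ** qsol \<sigma> \<epsilon> U V K Xi - qsol \<sigma> \<epsilon> U V K Xi ** mconj (psol \<epsilon> U V K Xi)"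
    unfolding st2 pc by (simp add: qR pR mm_norm algebra_simps)
  then show ?thesis
    by (simp add: T_def Ti_def Si_def W_def R_def A_def L_def Y_def Thi_def Th_def mm_norm)
qed

lemma sd_alg:
  fixes qp qb0 q0 qm pp p0 pb0 pbm a c d ciqt :: "complex^'m^'m"
  assumes h1: "qp ** qb0 = - \<epsilon> *\<^sub>R (pp - p0)" and h2: "qb0 ** qm = - \<epsilon> *\<^sub>R (pb0 - pbm)"
    and h3: "qp = a - pp ** q0" and h4: "qm = c + q0 ** pbm" and h5: "ciqt = - d"
    and h6: "a - 2 *\<^sub>R q0 + c - d = p0 ** q0 - q0 ** pb0" and eps: "\<epsilon> * \<epsilon> = 1"
  shows "ciqt + qp - 2 *\<^sub>R q0 + qm - \<epsilon> *\<^sub>R (qp ** qb0 ** q0 + q0 ** qb0 ** qm) = 0"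
proof -
  have 1: "qp ** qb0 ** q0 = - \<epsilon> *\<^sub>R ((pp - p0) ** q0)" using h1 by (simp add: mm_scaleR_left mm_neg_left)
  have 2: "q0 ** qb0 ** qm = - \<epsilon> *\<^sub>R (q0 ** (pb0 - pbm))"
    by (simp add: matrix_mul_assoc[symmetric] h2 mm_scaleR_right mm_neg_right)
  have d: "d = a - 2 *\<^sub>R q0 + c - p0 ** q0 + q0 ** pb0" using h6 by (simp add: algebra_simps)
  show ?thesis
    unfolding 1 2 h5 d
    by (simp add: h3 h4 mm_diff_right mm_diff_left scaleR_add_right eps algebra_simps)
qed

lemma omega_comm: "invertible (S::complex^'n^'n) \<Longrightarrow> S ** omegaS S = omegaS S ** S"
  unfolding omegaS_def by (simp add: mm_norm matrix_add_ldistrib mm_add_right inv_simps)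

lemma Xi_sd_shift: "invertible (S::complex^'n^'n) \<Longrightarrow> Xi_sd S (x + 1) t = S ** Xi_sd S x t"
  unfolding Xi_sd_def by (simp add: mzpow_succ matrix_mul_assoc)

lemma Xi_sd_comm: assumes i: "invertible (S::complex^'n^'n)" shows "S ** Xi_sd S x t = Xi_sd S x t ** S"
proof -
  have c1: "S ** mzpow S x = mzpow S x ** S" by (rule mzpow_comm[OF i refl])
  have "S ** (- csc \<i> (t *\<^sub>R omegaS S)) = (- csc \<i> (t *\<^sub>R omegaS S)) ** S"
    by (simp add: mm_neg_left mm_neg_right csc_mult_left csc_mult_right mm_scaleR_left mm_scaleR_right omega_comm[OF i])
  then have c2: "S ** mexp (- csc \<i> (t *\<^sub>R omegaS S)) = mexp (- csc \<i> (t *\<^sub>R omegaS S)) ** S" by (rule mexp_comm)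
  show ?thesis unfolding Xi_sd_def by (simp add: matrix_mul_assoc c1 c2[symmetric]) (simp add: matrix_mul_assoc[symmetric] c2)
qed

lemma Xi_sd_vd: assumes i: "invertible (S::complex^'n^'n)"
  shows "((\<lambda>s. Xi_sd S x s) has_vector_derivative (- csc \<i> (omegaS S)) ** Xi_sd S x t) (at t)"
proof -
  let ?N = "- csc \<i> (omegaS S)"
  have e: "Xi_sd S x s = mzpow S x ** mexp (0 + s *\<^sub>R ?N)" for s
    unfolding Xi_sd_def by (simp add: csc_scaleR)
  have "((\<lambda>s. mexp (0 + s *\<^sub>R ?N)) has_vector_derivative ?N ** mexp (0 + t *\<^sub>R ?N)) (at t)"
    by (rule mexp_vd) simp
  then have "((\<lambda>s. mzpow S x ** mexp (0 + s *\<^sub>R ?N)) has_vector_derivative mzpow S x ** (?N ** mexp (0 + t *\<^sub>R ?N))) (at t)"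
    by (rule vd_lmul)
  moreover have "?N ** mzpow S x = mzpow S x ** ?N"
  proof (rule mzpow_comm[OF i])
    show "?N ** S = S ** ?N"
      by (simp add: mm_neg_left mm_neg_right csc_mult_left csc_mult_right omega_comm[OF i])
  qed
  ultimately show ?thesis unfolding e by (simp add: matrix_mul_assoc)
qed

lemma eps_sq: "\<epsilon> \<in> {1, -1} \<Longrightarrow> \<epsilon> * \<epsilon> = (1::real)" by auto

lemma sd_main:
  fixes \<epsilon> \<sigma> :: real and S K :: "complex^'n^'n" and U :: "complex^'n^'m" and V :: "complex^'m^'n"
  assumes eps: "\<epsilon> \<in> {1, -1}" and sig: "\<sigma> \<in> {1, -1}"
  shows "invertible S \<and> matrix_inv S ** K - K ** mconj S = V ** U \<longrightarrow>
      (\<forall>(x::int) (t::real). inv_ok \<epsilon> K (Xi_sd S (x - 1) t) \<and> inv_ok \<epsilon> K (Xi_sd S x t)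
            \<and> inv_ok \<epsilon> K (Xi_sd S (x + 1) t) \<longrightarrow>
        (let q = (\<lambda>x t. qsol \<sigma> \<epsilon> U V K (Xi_sd S x t));
             p = (\<lambda>x t. psol \<epsilon> U V K (Xi_sd S x t))
         in \<exists>qt.
              ((\<lambda>s. q x s) has_vector_derivative qt) (at t)
            \<and> csc \<i> qt + q (x + 1) t - 2 *\<^sub>R q x t + q (x - 1) t
                - \<epsilon> *\<^sub>R (q (x + 1) t ** mconj (q x t) ** q x t
                          + q x t ** mconj (q x t) ** q (x - 1) t) = 0
            \<and> p (x + 1) t - p x t = - \<epsilon> *\<^sub>R (q (x + 1) t ** mconj (q x t))))"
proof (intro impI allI)
  fix x :: int and t :: real
  assume hS: "invertible S \<and> matrix_inv S ** K - K ** mconj S = V ** U"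
  then have iS: "invertible S" and Sy: "matrix_inv S ** K - K ** mconj S = V ** U" by auto
  assume oks: "inv_ok \<epsilon> K (Xi_sd S (x - 1) t) \<and> inv_ok \<epsilon> K (Xi_sd S x t) \<and> inv_ok \<epsilon> K (Xi_sd S (x + 1) t)"
  have e2: "\<epsilon> * \<epsilon> = 1" using eps by auto
  have s2: "\<sigma> * \<sigma> = 1" using sig by auto
  define Xm where "Xm = Xi_sd S (x - 1) t"
  define X0 where "X0 = Xi_sd S x t"
  define Xp where "Xp = Xi_sd S (x + 1) t"
  have ep: "Xp = S ** X0" unfolding Xp_def X0_def by (rule Xi_sd_shift[OF iS])
  have e0: "X0 = S ** Xm" unfolding Xm_def X0_def using Xi_sd_shift[OF iS, of "x - 1" t] by simp
  have okm: "inv_ok \<epsilon> K Xm" and ok0: "inv_ok \<epsilon> K X0" and okp: "inv_ok \<epsilon> K Xp"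
    using oks by (simp_all add: Xm_def X0_def Xp_def)
  have cm0: "S ** X0 = X0 ** S" unfolding X0_def by (rule Xi_sd_comm[OF iS])
  have cmm: "S ** Xm = Xm ** S" unfolding Xm_def by (rule Xi_sd_comm[OF iS])
  note sh0 = shift_lemmas[OF e2 s2 iS Sy cm0 ok0 okp[unfolded ep], folded ep]
  note shm = shift_lemmas[OF e2 s2 iS Sy cmm okm ok0[unfolded e0], folded e0]
  define q where "q = (\<lambda>Z. qsol \<sigma> \<epsilon> U V K Z)"
  define p where "p = (\<lambda>Z. psol \<epsilon> U V K Z)"
  define N where "N = - csc \<i> (omegaS S)"
  define T where "T = mconj S"
  define Ti where "Ti = matrix_inv T"
  define Si where "Si = matrix_inv S"
  define L where "L = mconj K"
  define Y where "Y = mconj V"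
  define Th where "Th = mconj X0"
  define Thi where "Thi = matrix_inv Th"
  define R where "R = Rm \<epsilon> K X0"
  define W where "W = (T + Ti - 2 *\<^sub>R mat 1) ** Thi - \<epsilon> *\<^sub>R (L ** ((S + Si - 2 *\<^sub>R mat 1) ** (X0 ** K)))"
  define qt where "qt = - (\<sigma> *\<^sub>R (U ** (R ** (dA \<epsilon> K X0 (N ** X0) ** (R ** Y)))))"
  have vd: "((\<lambda>s. qsol \<sigma> \<epsilon> U V K (Xi_sd S x s)) has_vector_derivative qt) (at t)"
  proof -
    have d: "((\<lambda>s. Xi_sd S x s) has_vector_derivative N ** X0) (at t)"
      unfolding N_def X0_def by (rule Xi_sd_vd[OF iS])
    have ok0': "inv_ok \<epsilon> K ((\<lambda>s. Xi_sd S x s) t)" using ok0 by (simp add: X0_def)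
    show ?thesis using vd_q[OF d ok0', of \<sigma> U V] by (simp add: qt_def R_def Y_def X0_def)
  qed
  have iTh: "invertible Th" unfolding Th_def using ok_facts(2)[OF ok0] .
  have iT: "invertible T" unfolding T_def by (rule invertible_mconj[OF iS])
  have iThi: "Th ** Thi = mat 1" "Thi ** Th = mat 1" "Th ** (Thi ** Z) = Z" "Thi ** (Th ** Z) = Z" for Z :: "complex^'p^'n"
    unfolding Thi_def using inv_simps[OF iTh] by simp_all
  have cT: "T ** Th = Th ** T" unfolding T_def Th_def by (metis cm0 mconj_mult)
  have cTiTh: "Ti ** Th = Th ** Ti" unfolding Ti_def by (rule comm_inv[OF cT iT])
  have cThiT: "Thi ** T = T ** Thi" unfolding Thi_def by (rule comm_inv[OF cT[symmetric] iTh])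
  have cThiTi: "Thi ** Ti = Ti ** Thi" unfolding Thi_def by (rule comm_inv[OF cTiTh[symmetric] iTh])
  have cThiTr: "Thi ** (T ** Z) = T ** (Thi ** Z)" for Z :: "complex^'p^'n" by (rule comm_r[OF cThiT])
  have cThiTir: "Thi ** (Ti ** Z) = Ti ** (Thi ** Z)" for Z :: "complex^'p^'n" by (rule comm_r[OF cThiTi])
  have csc_negc: "csc (- c) A = - csc c A" for c and A :: "complex^'n^'n" by (simp add: csc_def vec_eq_iff)
  have mN: "mconj N = csc \<i> (T + Ti - 2 *\<^sub>R mat 1)"
    by (simp add: N_def omegaS_def mconj_neg mconj_csc mconj_add mconj_diff mconj_scaleR mconj_mat1
        mconj_minv[OF iS] T_def Ti_def csc_negc)
  have dA_eq: "dA \<epsilon> K X0 (N ** X0) = - csc \<i> W"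
    unfolding dA_def W_def mconj_mult mN Th_def[symmetric] Thi_def[symmetric] L_def[symmetric]
    by (simp add: N_def omegaS_def Si_def
        mm_norm csc_norm iThi cThiT cThiTi cThiTr cThiTir algebra_simps)
  have ciqt: "csc \<i> qt = - (\<sigma> *\<^sub>R (U ** (R ** (W ** (R ** Y)))))"
    unfolding qt_def dA_eq by (simp add: mm_norm csc_norm csc_m1)
  have core: "\<sigma> *\<^sub>R (U ** (T ** (R ** Y))) - 2 *\<^sub>R q X0 + \<sigma> *\<^sub>R (U ** (R ** (Ti ** Y)))
        - \<sigma> *\<^sub>R (U ** (R ** (W ** (R ** Y)))) = p X0 ** q X0 - q X0 ** mconj (p X0)"
  proof -
    have "\<sigma> *\<^sub>R (U ** ((T ** R - 2 *\<^sub>R R + R ** Ti - R ** (W ** R)) ** Y)) = p X0 ** q X0 - q X0 ** mconj (p X0)"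
      using sd_core[OF e2 s2 iS Sy cm0 ok0]
      by (simp add: p_def q_def T_def Ti_def R_def W_def Si_def L_def Y_def Thi_def Th_def mm_norm)
    then show ?thesis by (simp add: mm_norm q_def qsol_R R_def Y_def algebra_simps)
  qed
  have "csc \<i> qt + q Xp - 2 *\<^sub>R q X0 + q Xm - \<epsilon> *\<^sub>R (q Xp ** mconj (q X0) ** q X0 + q X0 ** mconj (q X0) ** q Xm) = 0"
  proof (rule sd_alg[OF _ _ _ _ ciqt core e2])
    show "q Xp ** mconj (q X0) = - \<epsilon> *\<^sub>R (p Xp - p X0)"
      using sh0(1) e2 by (simp add: p_def q_def)
    show "mconj (q X0) ** q Xm = - \<epsilon> *\<^sub>R (mconj (p X0) - mconj (p Xm))"
    proof -
      have "mconj (p X0 - p Xm) = mconj (- \<epsilon> *\<^sub>R (q X0 ** mconj (q Xm)))" using shm(1) by (simp add: p_def q_def)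
      then have "mconj (p X0) - mconj (p Xm) = - \<epsilon> *\<^sub>R (mconj (q X0) ** q Xm)"
        by (simp add: mconj_diff mconj_scaleR mconj_neg mconj_mult mconj_mconj)
      then show ?thesis using e2 by simp
    qed
    show "q Xp = \<sigma> *\<^sub>R (U ** (T ** (R ** Y))) - p Xp ** q X0"
      using sh0(2) by (simp add: p_def q_def T_def R_def Y_def algebra_simps)
    show "q Xm = \<sigma> *\<^sub>R (U ** (R ** (Ti ** Y))) + q X0 ** mconj (p Xm)"
      using shm(3) by (simp add: p_def q_def T_def Ti_def R_def Y_def algebra_simps)
  qed
  then show "let q = (\<lambda>x t. qsol \<sigma> \<epsilon> U V K (Xi_sd S x t)); p = (\<lambda>x t. psol \<epsilon> U V K (Xi_sd S x t))
         in \<exists>qt. ((\<lambda>s. q x s) has_vector_derivative qt) (at t)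
            \<and> csc \<i> qt + q (x + 1) t - 2 *\<^sub>R q x t + q (x - 1) t
                - \<epsilon> *\<^sub>R (q (x + 1) t ** mconj (q x t) ** q x t + q x t ** mconj (q x t) ** q (x - 1) t) = 0
            \<and> p (x + 1) t - p x t = - \<epsilon> *\<^sub>R (q (x + 1) t ** mconj (q x t))"
    using vd sh0(1) unfolding Let_def
    by (intro exI[of _ qt] conjI) (simp_all add: q_def p_def Xm_def X0_def Xp_def)
qed

lemma csc_negc: "csc (- c) A = - csc c A" by (simp add: csc_def vec_eq_iff)

lemma fd_core:
  fixes S K Xi :: "complex^'n^'n" and U :: "complex^'n^'m" and V :: "complex^'m^'n" and \<epsilon> \<sigma> :: real
  assumes eps: "\<epsilon> * \<epsilon> = 1" and sig: "\<sigma> * \<sigma> = 1" and iS: "invertible S"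
    and ia: "invertible (mat 1 - csc \<i> (mat 1 - S))" and ib: "invertible (mat 1 + csc \<i> (mat 1 - matrix_inv S))"
    and Sy: "matrix_inv S ** K - K ** mconj S = V ** U"
    and cm: "S ** Xi = Xi ** S"
    and ok0: "inv_ok \<epsilon> K Xi" and ok1: "inv_ok \<epsilon> K (OmegaS S ** Xi)"
  shows "\<sigma> *\<^sub>R (U ** ((csc \<i> (Rm \<epsilon> K (OmegaS S ** Xi) - Rm \<epsilon> K Xi) + mconj S ** Rm \<epsilon> K (OmegaS S ** Xi)
            - Rm \<epsilon> K (OmegaS S ** Xi) - Rm \<epsilon> K Xi + Rm \<epsilon> K Xi ** matrix_inv (mconj S)) ** mconj V))
       = psol \<epsilon> U V K Xi ** qsol \<sigma> \<epsilon> U V K (OmegaS S ** Xi)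
         - qsol \<sigma> \<epsilon> U V K Xi ** mconj (psol \<epsilon> U V K (OmegaS S ** Xi))"
proof -
  note f0 = ok_facts[OF ok0] and f1 = ok_facts[OF ok1]
  define Om where "Om = OmegaS S"
  define a where "a = mat 1 - csc \<i> (mat 1 - S)"
  define b where "b = mat 1 + csc \<i> (mat 1 - matrix_inv S)"
  define ai where "ai = matrix_inv a"
  define T where "T = mconj S"
  define Ti where "Ti = matrix_inv T"
  define Si where "Si = matrix_inv S"
  define ac where "ac = mconj a"
  define bc where "bc = mconj b"
  define bci where "bci = matrix_inv bc"
  define L where "L = mconj K"
  define X where "X = mconj U"
  define Y where "Y = mconj V"
  define Th where "Th = mconj Xi"
  define Thi where "Thi = matrix_inv Th"
  define A where "A = Am \<epsilon> K Xi"
  define A1 where "A1 = Am \<epsilon> K (Om ** Xi)"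
  define R where "R = matrix_inv A"
  define R1 where "R1 = matrix_inv A1"
  have iA': "invertible (Am \<epsilon> K Xi)" "invertible (Am \<epsilon> K (OmegaS S ** Xi))" using f0 f1 by simp_all
  have iR: "R ** (A ** Z) = Z" "A ** (R ** Z) = Z" "R ** A = mat 1" "A ** R = mat 1" for Z :: "complex^'p^'n"
    using inv_simps[OF iA'(1)] by (simp_all add: R_def A_def)
  have iR1: "R1 ** (A1 ** Z) = Z" "A1 ** (R1 ** Z) = Z" "R1 ** A1 = mat 1" "A1 ** R1 = mat 1" for Z :: "complex^'p^'n"
    using inv_simps[OF iA'(2)] by (simp_all add: R1_def A1_def Om_def)
  have iT: "invertible T" unfolding T_def by (rule invertible_mconj[OF iS])
  have iTh: "invertible Th" unfolding Th_def by (rule f0(2))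
  have iThi: "Th ** Thi = mat 1" "Thi ** Th = mat 1" "Th ** (Thi ** Z) = Z" "Thi ** (Th ** Z) = Z" for Z :: "complex^'p^'n"
    unfolding Thi_def using inv_simps[OF iTh] by simp_all
  have iSi: "S ** Si = mat 1" "Si ** S = mat 1" "S ** (Si ** Z) = Z" "Si ** (S ** Z) = Z" for Z :: "complex^'p^'n"
    unfolding Si_def using inv_simps[OF iS] by simp_all
  have iTi: "T ** Ti = mat 1" "Ti ** T = mat 1" "T ** (Ti ** Z) = Z" "Ti ** (T ** Z) = Z" for Z :: "complex^'p^'n"
    unfolding Ti_def using inv_simps[OF iT] by simp_all
  have iac: "invertible ac" unfolding ac_def using invertible_mconj[OF ia] by (simp add: a_def)
  have ibc: "invertible bc" unfolding bc_def using invertible_mconj[OF ib] by (simp add: b_def)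
  have ibci: "bc ** bci = mat 1" "bc ** (bci ** Z) = Z" for Z :: "complex^'p^'n"
    unfolding bci_def using inv_simps[OF ibc] by simp_all
  have iai: "a ** ai = mat 1" "ai ** a = mat 1" "a ** (ai ** Z) = Z" "ai ** (a ** Z) = Z" for Z :: "complex^'p^'n"
    unfolding ai_def using inv_simps[OF ia[folded a_def]] by simp_all
  have acf: "ac = mat 1 + csc \<i> (mat 1 - T)"
    by (simp add: ac_def a_def T_def mconj_diff mconj_csc mconj_mat1 csc_negc)
  have bcf: "bc = mat 1 - csc \<i> (mat 1 - Ti)"
    by (simp add: bc_def b_def T_def Ti_def mconj_diff mconj_add mconj_csc mconj_mat1 mconj_minv[OF iS] csc_negc)
  have cSy: "Ti ** L = Y ** X + L ** S"
  proof -
    have "mconj (matrix_inv S ** K - K ** mconj S) = mconj (V ** U)" using Sy by simp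
    then have "Ti ** L - L ** S = Y ** X"
      by (simp add: mconj_diff mconj_mult mconj_minv[OF iS] mconj_mconj Ti_def T_def L_def X_def Y_def)
    then show ?thesis by (simp add: algebra_simps)
  qed
  have Sy1: "K ** T = Si ** K - V ** U" using Sy by (simp add: Si_def T_def algebra_simps)
  have F1: "K ** ac = b ** K + csc \<i> (V ** U)"
    unfolding acf b_def Si_def[symmetric]
    by (simp add: mm_norm csc_norm matrix_add_ldistrib mm_add_right Sy1 algebra_simps)
  have F1r: "K ** (ac ** Z) = b ** (K ** Z) + csc \<i> (V ** (U ** Z))" for Z :: "complex^'p^'n"
    by (simp add: matrix_mul_assoc F1 mm_add_right csc_mult_left)
  have F2: "bc ** L = L ** a + csc \<i> (Y ** X)"
    unfolding bcf a_def
    by (simp add: mm_norm csc_norm matrix_add_ldistrib mm_add_right cSy algebra_simps)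
  have F2r: "bc ** (L ** Z) = L ** (a ** Z) + csc \<i> (Y ** (X ** Z))" for Z :: "complex^'p^'n"
    by (simp add: matrix_mul_assoc F2 mm_add_right csc_mult_left)
  have cab: "a ** b = b ** a"
    unfolding a_def b_def Si_def[symmetric] by (simp add: mm_norm csc_norm matrix_add_ldistrib mm_add_right iSi algebra_simps)
  have F3: "a ** Om = b" unfolding Om_def OmegaS_def
    by (simp add: a_def[symmetric] b_def[symmetric] ai_def[symmetric] matrix_mul_assoc cab) (simp add: matrix_mul_assoc[symmetric] iai)
  have F3r: "a ** (Om ** Z) = b ** Z" for Z :: "complex^'p^'n" by (simp add: matrix_mul_assoc F3)
  have cSi: "Si ** Xi = Xi ** Si" unfolding Si_def by (rule comm_inv[OF cm iS])
  have cXb: "Xi ** b = b ** Xi"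
    unfolding b_def Si_def[symmetric] by (simp add: mm_norm csc_norm matrix_add_ldistrib mm_add_right cm cSi)
  have cXbr: "Xi ** (b ** Z) = b ** (Xi ** Z)" for Z :: "complex^'p^'n" by (rule comm_r[OF cXb])
  have cT: "T ** Th = Th ** T" unfolding T_def Th_def by (metis cm mconj_mult)
  have cTiTh: "Ti ** Th = Th ** Ti" unfolding Ti_def by (rule comm_inv[OF cT iT])
  have cThiT: "Thi ** T = T ** Thi" unfolding Thi_def by (rule comm_inv[OF cT[symmetric] iTh])
  have cThiTi: "Thi ** Ti = Ti ** Thi" unfolding Thi_def by (rule comm_inv[OF cTiTh[symmetric] iTh])
  have cbcThi: "bc ** Thi = Thi ** bc"
    unfolding bcf by (simp add: mm_norm csc_norm matrix_add_ldistrib mm_add_right cThiTi)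
  have cbcThir: "bc ** (Thi ** Z) = Thi ** (bc ** Z)" for Z :: "complex^'p^'n" by (rule comm_r[OF cbcThi])
  have cbcac: "bc ** ac = ac ** bc"
    unfolding bcf acf by (simp add: mm_norm csc_norm matrix_add_ldistrib mm_add_right iTi algebra_simps)
  have cbcacr: "bc ** (ac ** Z) = ac ** (bc ** Z)" for Z :: "complex^'p^'n" by (rule comm_r[OF cbcac])
  have mOm: "mconj Om = bc ** matrix_inv ac"
    by (simp add: Om_def OmegaS_def mconj_mult mconj_minv[OF ia] bc_def ac_def a_def b_def)
  have iOmc: "invertible (mconj Om)" unfolding mOm by (rule invertible_mult[OF ibc invertible_minv[OF iac]])
  have A1f: "A1 = Thi ** (ac ** bci) - \<epsilon> *\<^sub>R (L ** (Om ** (Xi ** K)))"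
  proof -
    have m1: "matrix_inv (mconj Om ** Th) = Thi ** matrix_inv (mconj Om)"
      by (simp add: minv_mult[OF iOmc iTh] Thi_def)
    have m2: "matrix_inv (mconj Om) = ac ** bci"
      unfolding mOm by (simp add: minv_mult[OF ibc invertible_minv[OF iac]] minv_minv[OF iac] bci_def)
    have "matrix_inv (mconj (Om ** Xi)) = Thi ** (ac ** bci)"
      unfolding mconj_mult Th_def[symmetric] m1 m2 ..
    then show ?thesis by (simp add: A1_def Am_def L_def mm_norm)
  qed
  have Af: "A = Thi - \<epsilon> *\<^sub>R (L ** (Xi ** K))"
    by (simp add: A_def Am_def Thi_def Th_def L_def mm_norm)
  have cThiac: "Thi ** ac = ac ** Thi"
    unfolding acf by (simp add: mm_norm csc_norm matrix_add_ldistrib mm_add_right cThiT)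
  have st1: "A ** ac - bc ** A1 = csc \<i> (\<epsilon> *\<^sub>R (Y ** (X ** (Om ** (Xi ** K)))) - \<epsilon> *\<^sub>R (L ** (Xi ** (V ** U))))"
    unfolding Af A1f
    by (simp add: mm_norm csc_norm F1 F1r F2 F2r F3 F3r cXb cXbr cbcThi cbcThir cbcac cbcacr ibci cThiac algebra_simps)
  have st2: "ac ** R1 - R ** bc = R ** ((A ** ac - bc ** A1) ** R1)"
    by (simp add: mm_norm iR iR1)
  have st3: "csc \<i> (R1 - R) + T ** R1 - R1 - R + R ** Ti = csc \<i> (ac ** R1 - R ** bc)"
    unfolding acf bcf by (simp add: mm_norm csc_norm matrix_add_ldistrib mm_add_right csc_m1 algebra_simps)
  have qR: "qsol \<sigma> \<epsilon> U V K Z = \<sigma> *\<^sub>R (U ** (Rm \<epsilon> K Z ** Y))" for Z by (simp add: qsol_R Y_def)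
  have "\<sigma> *\<^sub>R (U ** ((csc \<i> (R1 - R) + T ** R1 - R1 - R + R ** Ti) ** Y))
       = psol \<epsilon> U V K Xi ** qsol \<sigma> \<epsilon> U V K (Om ** Xi) - qsol \<sigma> \<epsilon> U V K Xi ** mconj (psol \<epsilon> U V K (Om ** Xi))"
    unfolding st3 st2 st1
    by (simp only: psol_conj[OF ok1[folded Om_def]] psol_R[OF ok0])
       (simp add: qR mm_norm csc_norm csc_m1 R_def A_def R1_def A1_def L_def X_def Y_def algebra_simps)
  then show ?thesis by (simp add: Om_def R_def A_def R1_def A1_def T_def Ti_def Y_def)
qed

lemma fd_alg:
  fixes q0 qT qPT qm p0 pT pPT pm a c :: "complex^'m^'m"
  assumes h1: "qPT ** mconj qT = - \<epsilon> *\<^sub>R (pPT - pT)" and h2: "mconj q0 ** qm = - \<epsilon> *\<^sub>R (mconj p0 - mconj pm)"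
    and h3: "qPT = a - pPT ** qT" and h4: "qm = c + q0 ** mconj pm"
    and h5: "csc \<i> (qT - q0) + a - qT - q0 + c = p0 ** qT - q0 ** mconj pT" and eps: "\<epsilon> * \<epsilon> = 1"
  shows "csc \<i> (qT - q0) + (qPT - qT) - (q0 - qm) - \<epsilon> *\<^sub>R (qPT ** mconj qT ** qT)
         - \<epsilon> *\<^sub>R (q0 ** mconj q0 ** qm) + (pT - p0) ** qT + q0 ** mconj (pT - p0) = 0"
proof -
  have 1: "qPT ** mconj qT ** qT = - \<epsilon> *\<^sub>R ((pPT - pT) ** qT)" using h1 by (simp add: mm_scaleR_left mm_neg_left)
  have 2: "q0 ** mconj q0 ** qm = - \<epsilon> *\<^sub>R (q0 ** (mconj p0 - mconj pm))"
    by (simp add: matrix_mul_assoc[symmetric] h2 mm_scaleR_right mm_neg_right)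
  have 5: "csc \<i> (qT - q0) = p0 ** qT - q0 ** mconj pT - a + qT + q0 - c" using h5 by (simp add: algebra_simps)
  show ?thesis
    unfolding 1 2 5 by (simp add: h3 h4 mconj_diff mm_diff_right mm_diff_left eps algebra_simps)
qed

lemma S_a_comm: "S ** (mat 1 - csc \<i> (mat 1 - S)) = (mat 1 - csc \<i> (mat 1 - S)) ** (S::complex^'n^'n)"
  by (simp add: mm_norm csc_norm mm_diff_left mm_diff_right)
lemma S_b_comm: "invertible S \<Longrightarrow> S ** (mat 1 + csc \<i> (mat 1 - matrix_inv S)) = (mat 1 + csc \<i> (mat 1 - matrix_inv S)) ** (S::complex^'n^'n)"
  by (simp add: mm_norm csc_norm matrix_add_ldistrib mm_add_right inv_simps)

lemma S_Om_comm:
  assumes iS: "invertible (S::complex^'n^'n)" and ia: "invertible (mat 1 - csc \<i> (mat 1 - S))"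
  shows "S ** OmegaS S = OmegaS S ** S"
proof -
  have c: "S ** matrix_inv (mat 1 - csc \<i> (mat 1 - S)) = matrix_inv (mat 1 - csc \<i> (mat 1 - S)) ** S"
    using comm_inv[OF S_a_comm[symmetric] ia] by simp
  show ?thesis unfolding OmegaS_def
    by (simp add: matrix_mul_assoc S_b_comm[OF iS]) (simp add: matrix_mul_assoc[symmetric] c)
qed

lemma invertible_Om:
  assumes ia: "invertible (mat 1 - csc \<i> (mat 1 - S))" and ib: "invertible (mat 1 + csc \<i> (mat 1 - matrix_inv (S::complex^'n^'n)))"
  shows "invertible (OmegaS S)"
  unfolding OmegaS_def by (rule invertible_mult[OF ib invertible_minv[OF ia]])

lemma Xi_fd_shift_x: "invertible (S::complex^'n^'n) \<Longrightarrow> Xi_fd S (x + 1) t = S ** Xi_fd S x t"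
  unfolding Xi_fd_def by (simp add: mzpow_succ matrix_mul_assoc)

lemma Xi_fd_shift_t:
  assumes iS: "invertible (S::complex^'n^'n)" and iO: "invertible (OmegaS S)" and c: "S ** OmegaS S = OmegaS S ** S"
  shows "Xi_fd S x (t + 1) = OmegaS S ** Xi_fd S x t"
proof -
  have "OmegaS S ** mzpow S x = mzpow S x ** OmegaS S" by (rule mzpow_comm[OF iS c[symmetric]])
  then show ?thesis unfolding Xi_fd_def
    by (simp add: mzpow_succ[OF iO]) (simp add: matrix_mul_assoc)
qed

lemma Xi_fd_comm:
  assumes iS: "invertible (S::complex^'n^'n)" and iO: "invertible (OmegaS S)" and c: "S ** OmegaS S = OmegaS S ** S"
  shows "S ** Xi_fd S x t = Xi_fd S x t ** S"
proof -
  have c1: "S ** mzpow S x = mzpow S x ** S" by (rule mzpow_comm[OF iS refl])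
  have c2: "S ** mzpow (OmegaS S) t = mzpow (OmegaS S) t ** S" by (rule mzpow_comm[OF iO c])
  show ?thesis unfolding Xi_fd_def by (simp add: matrix_mul_assoc c1) (simp add: matrix_mul_assoc[symmetric] c2)
qed

lemma fd_main:
  fixes \<epsilon> \<sigma> :: real and S K :: "complex^'n^'n" and U :: "complex^'n^'m" and V :: "complex^'m^'n"
  assumes eps: "\<epsilon> \<in> {1, -1}" and sig: "\<sigma> \<in> {1, -1}"
  shows "invertible S \<and> invertible (mat 1 - csc \<i> (mat 1 - S))
      \<and> invertible (mat 1 + csc \<i> (mat 1 - matrix_inv S))
      \<and> matrix_inv S ** K - K ** mconj S = V ** U \<longrightarrow>
      (\<forall>(x::int) (t::int). inv_ok \<epsilon> K (Xi_fd S x t) \<and> inv_ok \<epsilon> K (Xi_fd S (x + 1) t)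
            \<and> inv_ok \<epsilon> K (Xi_fd S (x - 1) t) \<and> inv_ok \<epsilon> K (Xi_fd S x (t + 1))
            \<and> inv_ok \<epsilon> K (Xi_fd S (x + 1) (t + 1)) \<longrightarrow>
        (let q = (\<lambda>x t. qsol \<sigma> \<epsilon> U V K (Xi_fd S x t));
             p = (\<lambda>x t. psol \<epsilon> U V K (Xi_fd S x t))
         in csc \<i> (q x (t + 1) - q x t)
              + (q (x + 1) (t + 1) - q x (t + 1))
              - (q x t - q (x - 1) t)
              - \<epsilon> *\<^sub>R (q (x + 1) (t + 1) ** mconj (q x (t + 1)) ** q x (t + 1))
              - \<epsilon> *\<^sub>R (q x t ** mconj (q x t) ** q (x - 1) t)
              + (p x (t + 1) - p x t) ** q x (t + 1)
              + q x t ** mconj (p x (t + 1) - p x t) = 0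
            \<and> p (x + 1) t - p x t = - \<epsilon> *\<^sub>R (q (x + 1) t ** mconj (q x t))))"
proof (intro impI allI)
  fix x t :: int
  assume hS: "invertible S \<and> invertible (mat 1 - csc \<i> (mat 1 - S))
      \<and> invertible (mat 1 + csc \<i> (mat 1 - matrix_inv S)) \<and> matrix_inv S ** K - K ** mconj S = V ** U"
  then have iS: "invertible S" and ia: "invertible (mat 1 - csc \<i> (mat 1 - S))"
    and ib: "invertible (mat 1 + csc \<i> (mat 1 - matrix_inv S))" and Sy: "matrix_inv S ** K - K ** mconj S = V ** U" by auto
  assume oks: "inv_ok \<epsilon> K (Xi_fd S x t) \<and> inv_ok \<epsilon> K (Xi_fd S (x + 1) t)
            \<and> inv_ok \<epsilon> K (Xi_fd S (x - 1) t) \<and> inv_ok \<epsilon> K (Xi_fd S x (t + 1))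
            \<and> inv_ok \<epsilon> K (Xi_fd S (x + 1) (t + 1))"
  have e2: "\<epsilon> * \<epsilon> = 1" using eps by auto
  have s2: "\<sigma> * \<sigma> = 1" using sig by auto
  have iO: "invertible (OmegaS S)" by (rule invertible_Om[OF ia ib])
  have cO: "S ** OmegaS S = OmegaS S ** S" by (rule S_Om_comm[OF iS ia])
  define X0 where "X0 = Xi_fd S x t"
  define Xp where "Xp = Xi_fd S (x + 1) t"
  define Xm where "Xm = Xi_fd S (x - 1) t"
  define XT where "XT = Xi_fd S x (t + 1)"
  define XPT where "XPT = Xi_fd S (x + 1) (t + 1)"
  have ep: "Xp = S ** X0" unfolding Xp_def X0_def by (rule Xi_fd_shift_x[OF iS])
  have e0: "X0 = S ** Xm" unfolding Xm_def X0_def using Xi_fd_shift_x[OF iS, of "x - 1" t] by simp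
  have eT: "XT = OmegaS S ** X0" unfolding XT_def X0_def by (rule Xi_fd_shift_t[OF iS iO cO])
  have ePT: "XPT = S ** XT" unfolding XPT_def XT_def by (rule Xi_fd_shift_x[OF iS])
  have ok0: "inv_ok \<epsilon> K X0" and okp: "inv_ok \<epsilon> K Xp" and okm: "inv_ok \<epsilon> K Xm"
    and okT: "inv_ok \<epsilon> K XT" and okPT: "inv_ok \<epsilon> K XPT"
    using oks by (simp_all add: X0_def Xp_def Xm_def XT_def XPT_def)
  have cm0: "S ** X0 = X0 ** S" unfolding X0_def by (rule Xi_fd_comm[OF iS iO cO])
  have cmm: "S ** Xm = Xm ** S" unfolding Xm_def by (rule Xi_fd_comm[OF iS iO cO])
  have cmT: "S ** XT = XT ** S" unfolding XT_def by (rule Xi_fd_comm[OF iS iO cO])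
  note sh0 = shift_lemmas[OF e2 s2 iS Sy cm0 ok0 okp[unfolded ep], folded ep]
  note shm = shift_lemmas[OF e2 s2 iS Sy cmm okm ok0[unfolded e0], folded e0]
  note shT = shift_lemmas[OF e2 s2 iS Sy cmT okT okPT[unfolded ePT], folded ePT]
  note core = fd_core[OF e2 s2 iS ia ib Sy cm0 ok0 okT[unfolded eT], folded eT]
  define q where "q = (\<lambda>Z. qsol \<sigma> \<epsilon> U V K Z)"
  define p where "p = (\<lambda>Z. psol \<epsilon> U V K Z)"
  define T where "T = mconj S"
  define Ti where "Ti = matrix_inv T"
  define Y where "Y = mconj V"
  have "csc \<i> (q XT - q X0) + (q XPT - q XT) - (q X0 - q Xm) - \<epsilon> *\<^sub>R (q XPT ** mconj (q XT) ** q XT)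
         - \<epsilon> *\<^sub>R (q X0 ** mconj (q X0) ** q Xm) + (p XT - p X0) ** q XT + q X0 ** mconj (p XT - p X0) = 0"
  proof (rule fd_alg[OF _ _ _ _ _ e2])
    show "q XPT ** mconj (q XT) = - \<epsilon> *\<^sub>R (p XPT - p XT)"
      using shT(1) e2 by (simp add: p_def q_def)
    show "mconj (q X0) ** q Xm = - \<epsilon> *\<^sub>R (mconj (p X0) - mconj (p Xm))"
    proof -
      have "mconj (p X0 - p Xm) = mconj (- \<epsilon> *\<^sub>R (q X0 ** mconj (q Xm)))" using shm(1) by (simp add: p_def q_def)
      then have "mconj (p X0) - mconj (p Xm) = - \<epsilon> *\<^sub>R (mconj (q X0) ** q Xm)"
        by (simp add: mconj_diff mconj_scaleR mconj_neg mconj_mult mconj_mconj)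
      then show ?thesis using e2 by simp
    qed
    show "q XPT = \<sigma> *\<^sub>R (U ** (T ** (Rm \<epsilon> K XT ** Y))) - p XPT ** q XT"
      using shT(2) by (simp add: p_def q_def T_def Y_def algebra_simps)
    show "q Xm = \<sigma> *\<^sub>R (U ** (Rm \<epsilon> K X0 ** (Ti ** Y))) + q X0 ** mconj (p Xm)"
      using shm(3) by (simp add: p_def q_def T_def Ti_def Y_def algebra_simps)
    show "csc \<i> (q XT - q X0) + \<sigma> *\<^sub>R (U ** (T ** (Rm \<epsilon> K XT ** Y))) - q XT - q X0
          + \<sigma> *\<^sub>R (U ** (Rm \<epsilon> K X0 ** (Ti ** Y))) = p X0 ** q XT - q X0 ** mconj (p XT)"
      using core by (simp add: p_def q_def T_def Ti_def Y_def qsol_R mm_norm csc_norm algebra_simps)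
  qed
  then show "let q = (\<lambda>x t. qsol \<sigma> \<epsilon> U V K (Xi_fd S x t)); p = (\<lambda>x t. psol \<epsilon> U V K (Xi_fd S x t))
         in csc \<i> (q x (t + 1) - q x t) + (q (x + 1) (t + 1) - q x (t + 1)) - (q x t - q (x - 1) t)
              - \<epsilon> *\<^sub>R (q (x + 1) (t + 1) ** mconj (q x (t + 1)) ** q x (t + 1))
              - \<epsilon> *\<^sub>R (q x t ** mconj (q x t) ** q (x - 1) t)
              + (p x (t + 1) - p x t) ** q x (t + 1) + q x t ** mconj (p x (t + 1) - p x t) = 0
            \<and> p (x + 1) t - p x t = - \<epsilon> *\<^sub>R (q (x + 1) t ** mconj (q x t))"
    using sh0(1) unfolding Let_def
    by (simp add: q_def p_def X0_def Xp_def Xm_def XT_def XPT_def)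
qed

lemma Xi_c_form_x: "Xi_c S y t = mexp (- csc \<i> (t *\<^sub>R (S ** S)) + y *\<^sub>R (- S))"
  unfolding Xi_c_def by (simp add: algebra_simps)

lemma Xi_c_form_t: "Xi_c S x s = mexp (- (x *\<^sub>R S) + s *\<^sub>R (- csc \<i> (S ** S)))"
  unfolding Xi_c_def by (simp add: algebra_simps csc_scaleR)

lemma Xi_c_dx: "((\<lambda>y. Xi_c S y t) has_vector_derivative (- S) ** Xi_c S x t) (at x)"
  unfolding Xi_c_form_x
  by (rule mexp_vd) (simp add: csc_norm mm_neg_left mm_neg_right csc_mult_left csc_mult_right mm_scaleR_left mm_scaleR_right matrix_mul_assoc)

lemma Xi_c_dt: "((\<lambda>s. Xi_c S x s) has_vector_derivative (- csc \<i> (S ** S)) ** Xi_c S x t) (at t)"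
  unfolding Xi_c_form_t
  by (rule mexp_vd) (simp add: csc_norm mm_neg_left mm_neg_right csc_mult_left csc_mult_right mm_scaleR_left mm_scaleR_right matrix_mul_assoc)

lemma Xi_c_comm: "S ** Xi_c S x t = Xi_c S x t ** S"
  unfolding Xi_c_def
  by (rule mexp_comm) (simp add: mm_neg_left mm_neg_right mm_diff_left mm_diff_right csc_mult_left csc_mult_right mm_scaleR_left mm_scaleR_right matrix_mul_assoc)

lemma Xi_c_inv: "invertible (Xi_c S x t)"
  unfolding Xi_c_def by (rule invertible_mexp)

lemma dA_x:
  assumes i: "invertible (mconj Xi)"
  shows "dA \<epsilon> K Xi (- S ** Xi) = matrix_inv (mconj Xi) ** mconj S + \<epsilon> *\<^sub>R (mconj K ** (S ** (Xi ** K)))"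
  unfolding dA_def
  by (simp add: mconj_mult mconj_neg mm_norm inv_simps[OF i])

lemma ev_nhds_at: "eventually P (at a) \<Longrightarrow> P a \<Longrightarrow> eventually P (nhds a)"
  unfolding eventually_at_filter by (auto elim: eventually_mono)

lemma ev_inv_ok:
  fixes Xi :: "real \<Rightarrow> complex^'n^'n"
  assumes d: "(Xi has_vector_derivative Xi') (at x)" and ok: "inv_ok \<epsilon> K (Xi x)"
    and iall: "\<And>y. invertible (Xi y)"
  shows "\<forall>\<^sub>F y in nhds x. inv_ok \<epsilon> K (Xi y)"
proof -
  note f = ok_facts[OF ok]
  have c: "isCont (\<lambda>y. Am \<epsilon> K (Xi y)) x"
    using vd_A[OF d f(2)] has_vector_derivative_continuous by blast
  have "\<forall>\<^sub>F y in at x. Am \<epsilon> K (Xi y) \<in> {A. det A \<noteq> 0}"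
    using topological_tendstoD[OF c[unfolded isCont_def] open_det_nz] f(3) invertible_det_nz by blast
  then have "\<forall>\<^sub>F y in nhds x. Am \<epsilon> K (Xi y) \<in> {A. det A \<noteq> 0}"
    by (rule ev_nhds_at) (use f(3) invertible_det_nz in blast)
  then show ?thesis
  proof (rule eventually_mono)
    fix y assume "Am \<epsilon> K (Xi y) \<in> {A. det A \<noteq> 0}"
    then have iA: "invertible (Am \<epsilon> K (Xi y))" using invertible_det_nz by blast
    have iB: "invertible (Bm \<epsilon> K (Xi y))" using invertible_mconj[OF iA] Bm_conj[OF iall] by simp
    show "inv_ok \<epsilon> K (Xi y)" using iA iB iall invertible_mconj[OF iall]
      by (simp add: inv_ok_def Am_def Bm_def)
  qed
qed

lemma cont_core:
  fixes S K Xi :: "complex^'n^'n" and U :: "complex^'n^'m" and V :: "complex^'m^'n" and \<epsilon> \<sigma> :: real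
  assumes eps: "\<epsilon> * \<epsilon> = 1" and sig: "\<sigma> * \<sigma> = 1"
    and Sy: "S ** K + K ** mconj S = V ** U"
    and cm: "S ** Xi = Xi ** S"
    and ok: "inv_ok \<epsilon> K Xi"
  shows "\<sigma> *\<^sub>R (U ** ((Rm \<epsilon> K Xi ** ((matrix_inv (mconj Xi) ** mconj S + \<epsilon> *\<^sub>R (mconj K ** (S ** (Xi ** K))))
              ** (Rm \<epsilon> K Xi ** ((matrix_inv (mconj Xi) ** mconj S + \<epsilon> *\<^sub>R (mconj K ** (S ** (Xi ** K)))) ** Rm \<epsilon> K Xi)))
           - Rm \<epsilon> K Xi ** ((matrix_inv (mconj Xi) ** (mconj S ** mconj S) - \<epsilon> *\<^sub>R (mconj K ** (S ** (S ** (Xi ** K))))) ** Rm \<epsilon> K Xi)) ** mconj V))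
       = \<epsilon> *\<^sub>R (qsol \<sigma> \<epsilon> U V K Xi ** mconj (qsol \<sigma> \<epsilon> U V K Xi) ** qsol \<sigma> \<epsilon> U V K Xi)"
proof -
  note f0 = ok_facts[OF ok]
  define T where "T = mconj S"
  define L where "L = mconj K"
  define X where "X = mconj U"
  define Y where "Y = mconj V"
  define Th where "Th = mconj Xi"
  define Thi where "Thi = matrix_inv Th"
  define A where "A = Am \<epsilon> K Xi"
  define R where "R = matrix_inv A"
  define D where "D = Thi ** T + \<epsilon> *\<^sub>R (L ** (S ** (Xi ** K)))"
  define D2 where "D2 = Thi ** (T ** T) - \<epsilon> *\<^sub>R (L ** (S ** (S ** (Xi ** K))))"
  have iA': "invertible (Am \<epsilon> K Xi)" using f0 by simp
  have iR: "R ** (A ** Z) = Z" "A ** (R ** Z) = Z" "R ** A = mat 1" "A ** R = mat 1" for Z :: "complex^'p^'n"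
    using inv_simps[OF iA'] by (simp_all add: R_def A_def)
  have iTh: "invertible Th" unfolding Th_def by (rule f0(2))
  have cSy: "T ** L = Y ** X - L ** S"
  proof -
    have "mconj (S ** K + K ** mconj S) = mconj (V ** U)" using Sy by simp
    then have "T ** L + L ** S = Y ** X"
      by (simp add: mconj_add mconj_mult mconj_mconj T_def L_def X_def Y_def)
    then show ?thesis by (simp add: algebra_simps)
  qed
  have cSyr: "T ** (L ** Z) = Y ** (X ** Z) - L ** (S ** Z)" for Z :: "complex^'p^'n"
    by (simp add: matrix_mul_assoc cSy mm_diff_right)
  have SK: "S ** K = V ** U - K ** T" using Sy by (simp add: T_def algebra_simps)
  have SKr: "S ** (K ** Z) = V ** (U ** Z) - K ** (T ** Z)" for Z :: "complex^'p^'n"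
    by (simp add: matrix_mul_assoc SK mm_diff_right)
  have cT: "T ** Th = Th ** T" unfolding T_def Th_def by (metis cm mconj_mult)
  have cThiT: "Thi ** T = T ** Thi" unfolding Thi_def by (rule comm_inv[OF cT[symmetric] iTh])
  have cThiTr: "Thi ** (T ** Z) = T ** (Thi ** Z)" for Z :: "complex^'p^'n" by (rule comm_r[OF cThiT])
  have cSXr: "S ** (Xi ** Z) = Xi ** (S ** Z)" for Z :: "complex^'p^'n" by (rule comm_r[OF cm])
  have Af: "A = Thi - \<epsilon> *\<^sub>R (L ** (Xi ** K))"
    by (simp add: A_def Am_def Thi_def Th_def L_def mm_norm)
  have Df1: "D = A ** T + \<epsilon> *\<^sub>R (L ** (Xi ** (V ** U)))"
    unfolding D_def Af by (simp add: mm_norm cSXr SK algebra_simps)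
  have Df2: "D = T ** A + \<epsilon> *\<^sub>R (Y ** (X ** (Xi ** K)))"
    unfolding D_def Af by (simp add: mm_norm cThiT cSyr cSXr algebra_simps)
  have D2f: "D2 = T ** (T ** A) + \<epsilon> *\<^sub>R (T ** (Y ** (X ** (Xi ** K)))) - \<epsilon> *\<^sub>R (Y ** (X ** (S ** (Xi ** K))))"
    unfolding D2_def Af by (simp add: mm_norm cThiT cThiTr cSyr cSXr algebra_simps)
  have RDR: "R ** (D ** R) = T ** R + \<epsilon> *\<^sub>R (R ** (L ** (Xi ** (V ** (U ** R)))))"
    unfolding Df1 by (simp add: mm_norm iR)
  have DR: "D ** R = T + \<epsilon> *\<^sub>R (Y ** (X ** (Xi ** (K ** R))))"
    unfolding Df2 by (simp add: mm_norm iR)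
  have RD2R: "R ** (D2 ** R) = R ** (T ** T) + \<epsilon> *\<^sub>R (R ** (T ** (Y ** (X ** (Xi ** (K ** R))))))
       - \<epsilon> *\<^sub>R (R ** (Y ** (X ** (S ** (Xi ** (K ** R))))))"
    unfolding D2f by (simp add: mm_norm iR)
  have TR: "T ** R = R ** T + \<epsilon> *\<^sub>R (R ** (Y ** (X ** (Xi ** (K ** R))))) - \<epsilon> *\<^sub>R (R ** (L ** (Xi ** (V ** (U ** R)))))"
  proof -
    have "A ** T - T ** A = \<epsilon> *\<^sub>R (Y ** (X ** (Xi ** K))) - \<epsilon> *\<^sub>R (L ** (Xi ** (V ** U)))"
      using Df1 Df2 by (simp add: algebra_simps)
    then have "R ** (A ** T - T ** A) ** R = R ** (\<epsilon> *\<^sub>R (Y ** (X ** (Xi ** K))) - \<epsilon> *\<^sub>R (L ** (Xi ** (V ** U)))) ** R"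
      by simp
    then show ?thesis by (simp add: mm_norm iR algebra_simps)
  qed
  have TRr: "T ** (R ** Z) = R ** (T ** Z) + \<epsilon> *\<^sub>R (R ** (Y ** (X ** (Xi ** (K ** (R ** Z))))))
       - \<epsilon> *\<^sub>R (R ** (L ** (Xi ** (V ** (U ** (R ** Z))))))" for Z :: "complex^'p^'n"
    by (simp add: matrix_mul_assoc TR mm_diff_right mm_add_right mm_scaleR_left)
  have main: "R ** (D ** (R ** (D ** R))) - R ** (D2 ** R)
      = \<epsilon> *\<^sub>R (R ** (Y ** (X ** (Xi ** (V ** (U ** R)))))) + R ** (Y ** (X ** (Xi ** (K ** (R ** (L ** (Xi ** (V ** (U ** R)))))))))"
  proof -
    have "R ** (D ** (R ** (D ** R))) = (R ** (D ** R)) ** (D ** R)" by (simp add: matrix_mul_assoc)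
    also have "\<dots> = (T ** R + \<epsilon> *\<^sub>R (R ** (L ** (Xi ** (V ** (U ** R)))))) ** (T + \<epsilon> *\<^sub>R (Y ** (X ** (Xi ** (K ** R)))))"
      by (simp only: RDR) (simp only: DR)
    finally have e: "R ** (D ** (R ** (D ** R))) = \<dots>" .
    show ?thesis unfolding e RD2R
      by (simp add: mm_norm TR TRr SK SKr cSXr eps algebra_simps)
  qed
  have qR: "qsol \<sigma> \<epsilon> U V K Xi = \<sigma> *\<^sub>R (U ** (R ** Y))" by (simp add: qsol_R Y_def R_def A_def)
  have qc: "mconj (qsol \<sigma> \<epsilon> U V K Xi) = \<sigma> *\<^sub>R (X ** ((Xi + \<epsilon> *\<^sub>R (Xi ** (K ** (R ** (L ** Xi))))) ** V))"
    by (simp add: qsol_conj[OF ok] Q_expand[OF ok] X_def R_def A_def L_def)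
  have "\<sigma> *\<^sub>R (U ** ((R ** (D ** (R ** (D ** R))) - R ** (D2 ** R)) ** Y))
       = \<epsilon> *\<^sub>R (qsol \<sigma> \<epsilon> U V K Xi ** mconj (qsol \<sigma> \<epsilon> U V K Xi) ** qsol \<sigma> \<epsilon> U V K Xi)"
    unfolding main qc unfolding qR by (simp add: mm_norm sig eps algebra_simps)
  then show ?thesis by (simp add: D_def D2_def R_def A_def Thi_def Th_def T_def L_def Y_def)
qed

lemma cont_p:
  fixes S K Xi :: "complex^'n^'n" and U :: "complex^'n^'m" and V :: "complex^'m^'n" and \<epsilon> \<sigma> :: real
  assumes eps: "\<epsilon> * \<epsilon> = 1" and sig: "\<sigma> * \<sigma> = 1"
    and Sy: "S ** K + K ** mconj S = V ** U"
    and cm: "S ** Xi = Xi ** S"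
    and ok: "inv_ok \<epsilon> K Xi"
  shows "\<epsilon> *\<^sub>R (U ** (mconj Xi ** (mconj K ** (- (Qm \<epsilon> K Xi ** dB \<epsilon> K Xi ((- S) ** Xi) ** Qm \<epsilon> K Xi)))
        + mconj ((- S) ** Xi) ** (mconj K ** Qm \<epsilon> K Xi)) ** V)
       = - \<epsilon> *\<^sub>R (qsol \<sigma> \<epsilon> U V K Xi ** mconj (qsol \<sigma> \<epsilon> U V K Xi))"
proof -
  note f0 = ok_facts[OF ok]
  define T where "T = mconj S"
  define L where "L = mconj K"
  define X where "X = mconj U"
  define Y where "Y = mconj V"
  define Th where "Th = mconj Xi"
  define Thi where "Thi = matrix_inv Th"
  define Xii where "Xii = matrix_inv Xi"
  define A where "A = Am \<epsilon> K Xi"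
  define R where "R = matrix_inv A"
  define B where "B = Bm \<epsilon> K Xi"
  define Q where "Q = matrix_inv B"
  define dBv where "dBv = dB \<epsilon> K Xi ((- S) ** Xi)"
  have iA': "invertible (Am \<epsilon> K Xi)" "invertible (Bm \<epsilon> K Xi)" using f0 by simp_all
  have iR: "R ** (A ** Z) = Z" "A ** (R ** Z) = Z" "R ** A = mat 1" "A ** R = mat 1" for Z :: "complex^'p^'n"
    using inv_simps[OF iA'(1)] by (simp_all add: R_def A_def)
  have iQ: "Q ** (B ** Z) = Z" "B ** (Q ** Z) = Z" "Q ** B = mat 1" "B ** Q = mat 1" for Z :: "complex^'p^'n"
    using inv_simps[OF iA'(2)] by (simp_all add: Q_def B_def)
  have iX: "Xi ** (Xii ** Z) = Z" "Xii ** (Xi ** Z) = Z" "Xi ** Xii = mat 1" "Xii ** Xi = mat 1" for Z :: "complex^'p^'n"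
    using inv_simps[OF f0(1)] by (simp_all add: Xii_def)
  have iTh: "Th ** (Thi ** Z) = Z" "Thi ** (Th ** Z) = Z" "Th ** Thi = mat 1" "Thi ** Th = mat 1" for Z :: "complex^'p^'n"
    using inv_simps[OF f0(2)] by (simp_all add: Thi_def Th_def)
  have cSy: "T ** L = Y ** X - L ** S"
  proof -
    have "mconj (S ** K + K ** mconj S) = mconj (V ** U)" using Sy by simp
    then have "T ** L + L ** S = Y ** X"
      by (simp add: mconj_add mconj_mult mconj_mconj T_def L_def X_def Y_def)
    then show ?thesis by (simp add: algebra_simps)
  qed
  have Af: "A = Thi - \<epsilon> *\<^sub>R (L ** (Xi ** K))"
    by (simp add: A_def Am_def Thi_def Th_def L_def mm_norm)
  have Bf: "B = Xii - \<epsilon> *\<^sub>R (K ** (Th ** L))"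
    by (simp add: B_def Bm_def Xii_def Th_def L_def mm_norm)
  have eR2: "A ** (Th ** (L ** Z)) = L ** (Xi ** (B ** Z))" for Z :: "complex^'p^'n"
    unfolding Af Bf by (simp add: mm_norm iX iTh)
  have AT: "A ** (T ** Z) = T ** (Thi ** Z) - \<epsilon> *\<^sub>R (L ** (Xi ** (K ** (T ** Z))))" for Z :: "complex^'p^'n"
  proof -
    have cT: "T ** Th = Th ** T" unfolding T_def Th_def by (metis cm mconj_mult)
    have cThiT: "Thi ** T = T ** Thi" unfolding Thi_def by (rule comm_inv[OF cT[symmetric] f0(2)[folded Th_def]])
    show ?thesis unfolding Af by (simp add: mm_norm matrix_mul_assoc[of Thi T] cThiT)
  qed
  have dBf: "dBv = Xii ** (S ** (Xi ** Xii)) + \<epsilon> *\<^sub>R (K ** (T ** (Th ** L)))"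
    by (simp add: dBv_def dB_def Xii_def mconj_mult mconj_neg T_def Th_def L_def mm_norm)
  define Z0 where "Z0 = Th ** (L ** (Q ** (dBv ** Q))) + T ** (Th ** (L ** Q))"
  have st1: "A ** (Z0 ** B) = Y ** X"
    unfolding Z0_def dBf by (simp add: mm_norm iQ eR2 AT iX iTh cSy algebra_simps)
  have st2: "Z0 = R ** (Y ** (X ** Q))"
  proof -
    have "R ** (A ** (Z0 ** B)) ** Q = R ** (Y ** X) ** Q" by (simp add: st1)
    then show ?thesis by (simp add: mm_norm iR iQ)
  qed
  have "\<epsilon> *\<^sub>R (U ** (Th ** (L ** (- (Q ** dBv ** Q))) + mconj ((- S) ** Xi) ** (L ** Q)) ** V)
      = - \<epsilon> *\<^sub>R (U ** (Z0 ** V))"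
    unfolding Z0_def by (simp add: mconj_mult mconj_neg T_def Th_def mm_norm algebra_simps)
  also have "\<dots> = - \<epsilon> *\<^sub>R (qsol \<sigma> \<epsilon> U V K Xi ** mconj (qsol \<sigma> \<epsilon> U V K Xi))"
    unfolding st2 by (simp only: qsol_conj[OF ok]) (simp add: qsol_R mm_norm sig R_def A_def Q_def B_def X_def Y_def)
  finally show ?thesis by (simp add: Th_def L_def Q_def B_def dBv_def)
qed

lemma c_main:
  fixes \<epsilon> \<sigma> :: real and S K :: "complex^'n^'n" and U :: "complex^'n^'m" and V :: "complex^'m^'n"
  assumes eps: "\<epsilon> \<in> {1, -1}" and sig: "\<sigma> \<in> {1, -1}"
  shows "S ** K + K ** mconj S = V ** U \<longrightarrow>
      (\<forall>x t. inv_ok \<epsilon> K (Xi_c S x t) \<longrightarrow>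
        (let q = (\<lambda>x t. qsol \<sigma> \<epsilon> U V K (Xi_c S x t));
             p = (\<lambda>x t. psol \<epsilon> U V K (Xi_c S x t))
         in \<exists>Qx qxx qt px.
              (\<forall>\<^sub>F y in nhds x. ((\<lambda>z. q z t) has_vector_derivative Qx y) (at y))
            \<and> (Qx has_vector_derivative qxx) (at x)
            \<and> ((\<lambda>s. q x s) has_vector_derivative qt) (at t)
            \<and> ((\<lambda>y. p y t) has_vector_derivative px) (at x)
            \<and> csc \<i> qt + qxx - (2 * \<epsilon>) *\<^sub>R (q x t ** mconj (q x t) ** q x t) = 0
            \<and> px = - \<epsilon> *\<^sub>R (q x t ** mconj (q x t))))"
proof (intro impI allI)
  fix x t :: real
  assume Sy: "S ** K + K ** mconj S = V ** U" and ok: "inv_ok \<epsilon> K (Xi_c S x t)"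
  have e2: "\<epsilon> * \<epsilon> = 1" using eps by auto
  have s2: "\<sigma> * \<sigma> = 1" using sig by auto
  define Xy where "Xy = (\<lambda>y. Xi_c S y t)"
  define X0 where "X0 = Xi_c S x t"
  define T where "T = mconj S"
  define L where "L = mconj K"
  define Y where "Y = mconj V"
  define Dc where "Dc = (\<lambda>y. matrix_inv (mconj (Xy y)) ** T + \<epsilon> *\<^sub>R (L ** (S ** (Xy y ** K))))"
  define Qx where "Qx = (\<lambda>y. - (\<sigma> *\<^sub>R (U ** (Rm \<epsilon> K (Xy y) ** (Dc y ** (Rm \<epsilon> K (Xy y) ** Y))))))"
  have dX: "(Xy has_vector_derivative (- S) ** Xy y) (at y)" for y
    unfolding Xy_def by (rule Xi_c_dx)
  have iX: "invertible (Xy y)" for y unfolding Xy_def by (rule Xi_c_inv)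
  have iTh: "invertible (mconj (Xy y))" for y by (rule invertible_mconj[OF iX])
  have ok0: "inv_ok \<epsilon> K (Xy x)" using ok by (simp add: Xy_def)
  note f0 = ok_facts[OF ok0]
  have cm: "S ** X0 = X0 ** S" unfolding X0_def by (rule Xi_c_comm)
  have ev: "\<forall>\<^sub>F y in nhds x. ((\<lambda>z. qsol \<sigma> \<epsilon> U V K (Xi_c S z t)) has_vector_derivative Qx y) (at y)"
    using ev_inv_ok[OF dX ok0 iX]
  proof (rule eventually_mono)
    fix y assume oky: "inv_ok \<epsilon> K (Xy y)"
    have "((\<lambda>z. qsol \<sigma> \<epsilon> U V K (Xy z)) has_vector_derivative
         - (\<sigma> *\<^sub>R (U ** (Rm \<epsilon> K (Xy y) ** (dA \<epsilon> K (Xy y) ((- S) ** Xy y) ** (Rm \<epsilon> K (Xy y) ** mconj V)))))) (at y)"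
      by (rule vd_q[OF dX oky])
    then show "((\<lambda>z. qsol \<sigma> \<epsilon> U V K (Xi_c S z t)) has_vector_derivative Qx y) (at y)"
      by (simp add: Qx_def Dc_def dA_x[OF invertible_mconj[OF Xi_c_inv]] T_def L_def Y_def Xy_def)
  qed
  define R where "R = Rm \<epsilon> K X0"
  define Thi where "Thi = matrix_inv (mconj X0)"
  define D where "D = Thi ** T + \<epsilon> *\<^sub>R (L ** (S ** (X0 ** K)))"
  define D2 where "D2 = Thi ** (T ** T) - \<epsilon> *\<^sub>R (L ** (S ** (S ** (X0 ** K))))"
  have dR: "((\<lambda>y. Rm \<epsilon> K (Xy y)) has_vector_derivative - (R ** D ** R)) (at x)"
    using vd_inv[OF vd_A[OF dX f0(2)] f0(3)]
    by (simp add: dA_x[OF invertible_mconj[OF Xi_c_inv]] R_def D_def Thi_def T_def L_def Xy_def X0_def)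
  have dX0: "(Xy has_vector_derivative (- S) ** X0) (at x)" using dX[of x] by (simp add: Xy_def X0_def)
  have dDc: "(Dc has_vector_derivative D2) (at x)"
  proof -
    have d1: "((\<lambda>y. matrix_inv (mconj (Xy y))) has_vector_derivative - (Thi ** mconj ((- S) ** X0) ** Thi)) (at x)"
      using vd_inv[OF vd_mconj[OF dX] f0(2)] by (simp add: Thi_def Xy_def X0_def)
    have "(Dc has_vector_derivative - (Thi ** mconj ((- S) ** X0) ** Thi) ** T + \<epsilon> *\<^sub>R (L ** (S ** (((- S) ** X0) ** K)))) (at x)"
      unfolding Dc_def
      by (rule has_vector_derivative_add[OF vd_rmul[OF d1] vd_scale[OF vd_lmul[OF vd_lmul[OF vd_rmul[OF dX0]]]]])
    moreover have "- (Thi ** mconj ((- S) ** X0) ** Thi) ** T + \<epsilon> *\<^sub>R (L ** (S ** (((- S) ** X0) ** K))) = D2"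
      unfolding D2_def Thi_def
      by (simp add: mconj_mult mconj_neg T_def mm_norm inv_simps[OF iTh[of x, unfolded Xy_def]] X0_def)
    ultimately show ?thesis by simp
  qed
  define qxx where "qxx = - (\<sigma> *\<^sub>R (U ** (R ** (D ** (- (R ** D ** R) ** Y) + D2 ** (R ** Y)) + - (R ** D ** R) ** (D ** (R ** Y)))))"
  have dQx: "(Qx has_vector_derivative qxx) (at x)"
  proof -
    have DcX: "Dc x = D" by (simp add: Dc_def D_def Thi_def Xy_def X0_def)
    have RX: "Rm \<epsilon> K (Xy x) = R" by (simp add: R_def Xy_def X0_def)
    have "((\<lambda>y. Rm \<epsilon> K (Xy y) ** (Dc y ** (Rm \<epsilon> K (Xy y) ** Y))) has_vector_derivative
        Rm \<epsilon> K (Xy x) ** (Dc x ** (- (R ** D ** R) ** Y) + D2 ** (Rm \<epsilon> K (Xy x) ** Y)) + - (R ** D ** R) ** (Dc x ** (Rm \<epsilon> K (Xy x) ** Y))) (at x)"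
      by (rule vd_mm[OF dR vd_mm[OF dDc vd_rmul[OF dR]]])
    then have "(Qx has_vector_derivative - (\<sigma> *\<^sub>R (U ** (Rm \<epsilon> K (Xy x) ** (Dc x ** (- (R ** D ** R) ** Y) + D2 ** (Rm \<epsilon> K (Xy x) ** Y)) + - (R ** D ** R) ** (Dc x ** (Rm \<epsilon> K (Xy x) ** Y)))))) (at x)"
      unfolding Qx_def by (intro has_vector_derivative_minus vd_scale vd_lmul)
    then show ?thesis unfolding qxx_def DcX RX .
  qed
  define qt where "qt = - (\<sigma> *\<^sub>R (U ** (R ** (dA \<epsilon> K X0 ((- csc \<i> (S ** S)) ** X0) ** (R ** Y)))))"
  have dqt: "((\<lambda>s. qsol \<sigma> \<epsilon> U V K (Xi_c S x s)) has_vector_derivative qt) (at t)"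
  proof -
    have ok': "inv_ok \<epsilon> K ((\<lambda>s. Xi_c S x s) t)" using ok by simp
    show ?thesis using vd_q[OF Xi_c_dt ok', of \<sigma> U V] by (simp add: qt_def R_def X0_def Y_def)
  qed
  have csc_negc: "csc (- c) A = - csc c A" for c and A :: "complex^'n^'n" by (simp add: csc_def vec_eq_iff)
  have dAt: "dA \<epsilon> K X0 ((- csc \<i> (S ** S)) ** X0) = - csc \<i> D2"
    unfolding dA_def D2_def Thi_def
    by (simp add: mconj_mult mconj_neg mconj_csc csc_negc T_def L_def mm_norm csc_norm inv_simps[OF iTh[of x, unfolded Xy_def]] X0_def algebra_simps)
  define px where "px = \<epsilon> *\<^sub>R (U ** (mconj X0 ** (mconj K ** (- (Qm \<epsilon> K X0 ** dB \<epsilon> K X0 ((- S) ** X0) ** Qm \<epsilon> K X0)))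
        + mconj ((- S) ** X0) ** (mconj K ** Qm \<epsilon> K X0)) ** V)"
  have dpx: "((\<lambda>y. psol \<epsilon> U V K (Xi_c S y t)) has_vector_derivative px) (at x)"
    using vd_p[OF dX ok0, of U V] by (simp add: px_def Xy_def X0_def)
  have pxe: "px = - \<epsilon> *\<^sub>R (qsol \<sigma> \<epsilon> U V K X0 ** mconj (qsol \<sigma> \<epsilon> U V K X0))"
    unfolding px_def by (rule cont_p[OF e2 s2 Sy cm ok[folded X0_def]])
  have core: "\<sigma> *\<^sub>R (U ** ((R ** (D ** (R ** (D ** R))) - R ** (D2 ** R)) ** Y))
      = \<epsilon> *\<^sub>R (qsol \<sigma> \<epsilon> U V K X0 ** mconj (qsol \<sigma> \<epsilon> U V K X0) ** qsol \<sigma> \<epsilon> U V K X0)"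
    using cont_core[OF e2 s2 Sy cm ok[folded X0_def]] by (simp add: R_def D_def D2_def Thi_def T_def L_def Y_def)
  define P where "P = \<sigma> *\<^sub>R (U ** (R ** (D ** (R ** (D ** (R ** Y))))))"
  define Qd where "Qd = \<sigma> *\<^sub>R (U ** (R ** (D2 ** (R ** Y))))"
  define qqq where "qqq = qsol \<sigma> \<epsilon> U V K X0 ** mconj (qsol \<sigma> \<epsilon> U V K X0) ** qsol \<sigma> \<epsilon> U V K X0"
  have A1: "csc \<i> qt = - Qd"
    unfolding qt_def dAt Qd_def by (simp add: mm_norm csc_norm csc_m1)
  have B1: "qxx = - (- P + Qd + - P)"
  proof -
    have t1: "R ** (D ** (- (R ** D ** R) ** Y)) = - (R ** (D ** (R ** (D ** (R ** Y)))))"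
      by (simp add: mm_neg_left mm_neg_right matrix_mul_assoc)
    have t2: "- (R ** D ** R) ** (D ** (R ** Y)) = - (R ** (D ** (R ** (D ** (R ** Y)))))"
      by (simp add: mm_neg_left matrix_mul_assoc)
    show ?thesis unfolding qxx_def matrix_add_ldistrib t1 t2 P_def Qd_def
      by (simp only: matrix_add_ldistrib mm_neg_right scaleR_add_right scaleR_minus_right)
  qed
  have C1: "(2 * \<epsilon>) *\<^sub>R qqq = (P - Qd) + (P - Qd)"
  proof -
    have "\<epsilon> *\<^sub>R qqq = P - Qd" unfolding qqq_def core[symmetric] P_def Qd_def by (simp add: mm_norm scaleR_diff_right)
    then show ?thesis by (simp add: scaleR_2 flip: scaleR_scaleR)
  qed
  have grp: "a + b - c = 0" if "a = - Qd'" "b = - (- P' + Qd' + - P')" "c = (P' - Qd') + (P' - Qd')"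
    for a b c P' Qd' :: "'z::ab_group_add"
    unfolding that by (simp add: algebra_simps)
  have eq: "csc \<i> qt + qxx - (2 * \<epsilon>) *\<^sub>R qqq = 0" by (rule grp[OF A1 B1 C1])
  show "let q = (\<lambda>x t. qsol \<sigma> \<epsilon> U V K (Xi_c S x t)); p = (\<lambda>x t. psol \<epsilon> U V K (Xi_c S x t))
         in \<exists>Qx qxx qt px.
              (\<forall>\<^sub>F y in nhds x. ((\<lambda>z. q z t) has_vector_derivative Qx y) (at y))
            \<and> (Qx has_vector_derivative qxx) (at x)
            \<and> ((\<lambda>s. q x s) has_vector_derivative qt) (at t)
            \<and> ((\<lambda>y. p y t) has_vector_derivative px) (at x)
            \<and> csc \<i> qt + qxx - (2 * \<epsilon>) *\<^sub>R (q x t ** mconj (q x t) ** q x t) = 0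
            \<and> px = - \<epsilon> *\<^sub>R (q x t ** mconj (q x t))"
    unfolding Let_def
    using ev dQx dqt dpx eq pxe unfolding X0_def qqq_def
    by blast
qed

theorem proposition6p1:
  fixes \<epsilon> \<sigma> :: real
    and S K :: "complex^'n^'n" and U :: "complex^'n^'m" and V :: "complex^'m^'n"
  assumes eps: "\<epsilon> \<in> {1, -1}" and sig: "\<sigma> \<in> {1, -1}"
  shows
  \<comment> \<open>continuous case\<close>
  "(S ** K + K ** mconj S = V ** U \<longrightarrow>
      (\<forall>x t. inv_ok \<epsilon> K (Xi_c S x t) \<longrightarrow>
        (let q = (\<lambda>x t. qsol \<sigma> \<epsilon> U V K (Xi_c S x t));
             p = (\<lambda>x t. psol \<epsilon> U V K (Xi_c S x t))
         in \<exists>Qx qxx qt px.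
              (\<forall>\<^sub>F y in nhds x. ((\<lambda>z. q z t) has_vector_derivative Qx y) (at y))
            \<and> (Qx has_vector_derivative qxx) (at x)
            \<and> ((\<lambda>s. q x s) has_vector_derivative qt) (at t)
            \<and> ((\<lambda>y. p y t) has_vector_derivative px) (at x)
            \<and> csc \<i> qt + qxx - (2 * \<epsilon>) *\<^sub>R (q x t ** mconj (q x t) ** q x t) = 0
            \<and> px = - \<epsilon> *\<^sub>R (q x t ** mconj (q x t)))))
   \<and>
  \<comment> \<open>semi-discrete case\<close>
   (invertible S \<and> matrix_inv S ** K - K ** mconj S = V ** U \<longrightarrow>
      (\<forall>(x::int) (t::real). inv_ok \<epsilon> K (Xi_sd S (x - 1) t) \<and> inv_ok \<epsilon> K (Xi_sd S x t)
            \<and> inv_ok \<epsilon> K (Xi_sd S (x + 1) t) \<longrightarrow>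
        (let q = (\<lambda>x t. qsol \<sigma> \<epsilon> U V K (Xi_sd S x t));
             p = (\<lambda>x t. psol \<epsilon> U V K (Xi_sd S x t))
         in \<exists>qt.
              ((\<lambda>s. q x s) has_vector_derivative qt) (at t)
            \<and> csc \<i> qt + q (x + 1) t - 2 *\<^sub>R q x t + q (x - 1) t
                - \<epsilon> *\<^sub>R (q (x + 1) t ** mconj (q x t) ** q x t
                          + q x t ** mconj (q x t) ** q (x - 1) t) = 0
            \<and> p (x + 1) t - p x t = - \<epsilon> *\<^sub>R (q (x + 1) t ** mconj (q x t)))))
   \<and>
  \<comment> \<open>fully discrete case\<close>
   (invertible S \<and> invertible (mat 1 - csc \<i> (mat 1 - S))
      \<and> invertible (mat 1 + csc \<i> (mat 1 - matrix_inv S))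
      \<and> matrix_inv S ** K - K ** mconj S = V ** U \<longrightarrow>
      (\<forall>(x::int) (t::int). inv_ok \<epsilon> K (Xi_fd S x t) \<and> inv_ok \<epsilon> K (Xi_fd S (x + 1) t)
            \<and> inv_ok \<epsilon> K (Xi_fd S (x - 1) t) \<and> inv_ok \<epsilon> K (Xi_fd S x (t + 1))
            \<and> inv_ok \<epsilon> K (Xi_fd S (x + 1) (t + 1)) \<longrightarrow>
        (let q = (\<lambda>x t. qsol \<sigma> \<epsilon> U V K (Xi_fd S x t));
             p = (\<lambda>x t. psol \<epsilon> U V K (Xi_fd S x t))
         in csc \<i> (q x (t + 1) - q x t)
              + (q (x + 1) (t + 1) - q x (t + 1))
              - (q x t - q (x - 1) t)
              - \<epsilon> *\<^sub>R (q (x + 1) (t + 1) ** mconj (q x (t + 1)) ** q x (t + 1))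
              - \<epsilon> *\<^sub>R (q x t ** mconj (q x t) ** q (x - 1) t)
              + (p x (t + 1) - p x t) ** q x (t + 1)
              + q x t ** mconj (p x (t + 1) - p x t) = 0
            \<and> p (x + 1) t - p x t = - \<epsilon> *\<^sub>R (q (x + 1) t ** mconj (q x t)))))"
  using c_main[OF eps sig] sd_main[OF eps sig] fd_main[OF eps sig]
  by blast

end
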